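(* Let $\Omega\subseteq\mathbb{F}$ be a P-closed set with P-bases $\mathcal{A},\mathcal{B}$, $n=\mathrm{Rk}(\Omega)$. Let $a^{(1)},\dots,a^{(\ell)}\in\mathbb{F}$ lie in pairwise distinct conjugacy classes such that $\mathcal{A}_i=\mathcal{A}\cap C(a^{(i)})$ and $\mathcal{B}_i=\mathcal{B}\cap C(a^{(i)})$ are non-empty for each $i$ and $\mathcal{A}=\bigcup_i\mathcal{A}_i$, $\mathcal{B}=\bigcup_i\mathcal{B}_i$. Then $\#\mathcal{A}_i=\#\mathcal{B}_i=:n_i$ and $n=n_1+\dots+n_\ell$. Write $\mathcal{A}_i=\{a^{(i)}_1,\dots,a^{(i)}_{n_i}\}$, $\mathcal{B}_i=\{b^{(i)}_1,\dots,b^{(i)}_{n_i}\}$ and pick $\alpha^{(i)}_j,\beta^{(i)}_j\in\mathbb{F}^*$ with $a^{(i)}_j=\mathcal{D}_{a^{(i)}}(\alpha^{(i)}_j)(\alpha^{(i)}_j)^{-1}$ and $b^{(i)}_j=\mathcal{D}_{a^{(i)}}(\beta^{(i)}_j)(\beta^{(i)}_j)^{-1}$. Define $\phi_\mathcal{A}:\mathbb{F}^\mathcal{A}\to\mathbb{F}^n$ by $\phi_\mathcal{A}(f)=(\mathbf{c}^{(1)},\dots,\mathbf{c}^{(\ell)})$, $\mathbf{c}^{(i)}\in\mathbb{F}^{n_i}$, $c^{(i)}_j=F^{\mathcal{D}_{a^{(i)}}}(\alpha^{(i)}_j)$, where $F\in\mathbb{F}[x;\sigma,\delta]_n$ is the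 unique polynomial with $E_\mathcal{A}(F)=f$; define $\phi_\mathcal{B}$ analogously using the $\beta^{(i)}_j$. Then for each $i$ there is an invertible $M_i\in K_{a^{(i)}}^{n_i\times n_i}$ with $(\beta^{(i)}_1,\dots,\beta^{(i)}_{n_i})=(\alpha^{(i)}_1,\dots,\alpha^{(i)}_{n_i})M_i$; letting $M=\mathrm{diag}(M_1,\dots,M_\ell)$ and $\pi_M(\mathbf{c})=\mathbf{c}M$, the maps $\phi_\mathcal{A},\phi_\mathcal{B},\pi_{\mathcal{A},\mathcal{B}},\pi_M$ are left vector space isomorphisms and $\phi_\mathcal{B}\circ\pi_{\mathcal{A},\mathcal{B}}=\pi_M\circ\phi_\mathcal{A}$.
   Context: $\mathbb{F}$ is a division ring, $\sigma$ a ring endomorphism, $\delta$ a $\sigma$-derivation ($\delta$ additive, $\delta(ab)=\sigma(a)\delta(b)+\delta(a)b$); $\mathbb{F}[x;\sigma,\delta]$ the skew polynomial ring (left $\mathbb{F}$-space with basis $x^i$, $xa=\sigma(a)x+\delta(a)$), $\mathbb{F}[x;\sigma,\delta]_n$ the elements of degree $<n$; evaluation $F(a)$ defined by $F-F(a)\in\mathbb{F}[x;\sigma,\delta](x-a)$, $E_\mathcal{A}(F)=(a\mapsto F(a))\in\mathbb{F}^\mathcal{A}$. P-closure $\overline\Omega$ is the common zero set of all skew polynomials vanishing on $\Omega$; P-closed, P-independent (no element in the P-closure of the others), P-basis (P-independent subset whose P-closure is $\Omega$); $\mathrm{Rk}(\Omega)$ the common size of P-bases; $E_\mathcal{A}$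 is a bijection $\mathbb{F}[x;\sigma,\delta]_n\to\mathbb{F}^\mathcal{A}$. $\pi_{\mathcal{A},\mathcal{B}}(E_\mathcal{A}(F))=E_\mathcal{B}(F)$. For $a\in\mathbb{F}$: $\mathcal{D}_a(b)=\sigma(b)a+\delta(b)$, $\mathcal{D}_a^i$ its $i$-fold composition ($\mathcal{D}_a^0=\mathrm{Id}$); for $F=\sum_iF_ix^i$, $F^{\mathcal{D}_a}(b)=\sum_iF_i\mathcal{D}_a^i(b)$; $K_a=\{b:\mathcal{D}_a(b)=ab\}$ (a division subring); $C(a)=\{\mathcal{D}_a(b)b^{-1}:b\in\mathbb{F}^*\}$. *)

theory Defs
  imports Main
begin

definition ring_endo :: "('a::division_ring \<Rightarrow> 'a) \<Rightarrow> bool" where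
  "ring_endo \<sigma> \<longleftrightarrow> (\<forall>x y. \<sigma> (x + y) = \<sigma> x + \<sigma> y) \<and> (\<forall>x y. \<sigma> (x * y) = \<sigma> x * \<sigma> y) \<and> \<sigma> 1 = 1"

definition sigma_derivation :: "('a::division_ring \<Rightarrow> 'a) \<Rightarrow> ('a \<Rightarrow> 'a) \<Rightarrow> bool" where
  "sigma_derivation \<sigma> \<delta> \<longleftrightarrow> (\<forall>x y. \<delta> (x + y) = \<delta> x + \<delta> y) \<and>
     (\<forall>x y. \<delta> (x * y) = \<sigma> x * \<delta> y + \<delta> x * y)"

section \<open>Skew polynomials F[x;sigma,delta], as coefficient sequences (F i = coefficient of x^i, on the left)\<close>

definition skpolys :: "(nat \<Rightarrow> 'a::zero) set" where
  "skpolys = {F. finite {i. F i \<noteq> 0}}"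

definition skpolys_lt :: "nat \<Rightarrow> (nat \<Rightarrow> 'a::zero) set" where
  "skpolys_lt n = {F. \<forall>i\<ge>n. F i = 0}"

definition skconst :: "'a::zero \<Rightarrow> nat \<Rightarrow> 'a" where
  "skconst c = (\<lambda>k. if k = 0 then c else 0)"

definition skXminus :: "'a::division_ring \<Rightarrow> nat \<Rightarrow> 'a" where
  "skXminus a = (\<lambda>k. if k = 0 then - a else if k = 1 then 1 else 0)"

text \<open>Left multiplication by x, using x b = sigma(b) x + delta(b).\<close>
definition skxmul :: "('a::division_ring \<Rightarrow> 'a) \<Rightarrow> ('a \<Rightarrow> 'a) \<Rightarrow> (nat \<Rightarrow> 'a) \<Rightarrow> nat \<Rightarrow> 'a" where
  "skxmul \<sigma> \<delta> G = (\<lambda>k. (if k = 0 then 0 else \<sigma> (G (k - 1))) + \<delta> (G k))"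

definition skmult :: "('a::division_ring \<Rightarrow> 'a) \<Rightarrow> ('a \<Rightarrow> 'a) \<Rightarrow> (nat \<Rightarrow> 'a) \<Rightarrow> (nat \<Rightarrow> 'a) \<Rightarrow> nat \<Rightarrow> 'a" where
  "skmult \<sigma> \<delta> F G = (\<lambda>k. \<Sum>i\<in>{i. F i \<noteq> 0}. F i * (skxmul \<sigma> \<delta> ^^ i) G k)"

definition skeval :: "('a::division_ring \<Rightarrow> 'a) \<Rightarrow> ('a \<Rightarrow> 'a) \<Rightarrow> (nat \<Rightarrow> 'a) \<Rightarrow> 'a \<Rightarrow> 'a" where
  "skeval \<sigma> \<delta> F a = (THE c. \<exists>G\<in>skpolys. (\<lambda>k. F k - skconst c k) = skmult \<sigma> \<delta> G (skXminus a))"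

text \<open>F^A, as functions vanishing outside A, and the evaluation map E_A.\<close>
definition funspace :: "'b set \<Rightarrow> ('b \<Rightarrow> 'a::zero) set" where
  "funspace A = {f. \<forall>x. x \<notin> A \<longrightarrow> f x = 0}"

definition Eval_on :: "('a::division_ring \<Rightarrow> 'a) \<Rightarrow> ('a \<Rightarrow> 'a) \<Rightarrow> 'a set \<Rightarrow> (nat \<Rightarrow> 'a) \<Rightarrow> 'a \<Rightarrow> 'a" where
  "Eval_on \<sigma> \<delta> A F = (\<lambda>b. if b \<in> A then skeval \<sigma> \<delta> F b else 0)"

definition P_closure :: "('a::division_ring \<Rightarrow> 'a) \<Rightarrow> ('a \<Rightarrow> 'a) \<Rightarrow> 'a set \<Rightarrow> 'a set" where
  "P_closure \<sigma> \<delta> \<Omega> = {b. \<forall>F\<in>skpolys. (\<forall>c\<in>\<Omega>. skeval \<sigma> \<delta> F c = 0) \<longrightarrow> skeval \<sigma> \<delta> F b = 0}"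

definition P_closed :: "('a::division_ring \<Rightarrow> 'a) \<Rightarrow> ('a \<Rightarrow> 'a) \<Rightarrow> 'a set \<Rightarrow> bool" where
  "P_closed \<sigma> \<delta> \<Omega> \<longleftrightarrow> P_closure \<sigma> \<delta> \<Omega> = \<Omega>"

definition P_independent :: "('a::division_ring \<Rightarrow> 'a) \<Rightarrow> ('a \<Rightarrow> 'a) \<Rightarrow> 'a set \<Rightarrow> bool" where
  "P_independent \<sigma> \<delta> A \<longleftrightarrow> (\<forall>b\<in>A. b \<notin> P_closure \<sigma> \<delta> (A - {b}))"

definition P_basis :: "('a::division_ring \<Rightarrow> 'a) \<Rightarrow> ('a \<Rightarrow> 'a) \<Rightarrow> 'a set \<Rightarrow> 'a set \<Rightarrow> bool" where
  "P_basis \<sigma> \<delta> \<Omega> A \<longleftrightarrow> A \<subseteq> \<Omega> \<and> P_independent \<sigma> \<delta> A \<and> P_closure \<sigma> \<delta> A = \<Omega>"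

text \<open>Rank: the (common) size of a P-basis.\<close>
definition Rk :: "('a::division_ring \<Rightarrow> 'a) \<Rightarrow> ('a \<Rightarrow> 'a) \<Rightarrow> 'a set \<Rightarrow> nat" where
  "Rk \<sigma> \<delta> \<Omega> = card (SOME A. P_basis \<sigma> \<delta> \<Omega> A)"

definition Dop :: "('a::division_ring \<Rightarrow> 'a) \<Rightarrow> ('a \<Rightarrow> 'a) \<Rightarrow> 'a \<Rightarrow> 'a \<Rightarrow> 'a" where
  "Dop \<sigma> \<delta> a b = \<sigma> b * a + \<delta> b"

definition Dapply :: "('a::division_ring \<Rightarrow> 'a) \<Rightarrow> ('a \<Rightarrow> 'a) \<Rightarrow> (nat \<Rightarrow> 'a) \<Rightarrow> 'a \<Rightarrow> 'a \<Rightarrow> 'a" where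
  "Dapply \<sigma> \<delta> F a b = (\<Sum>i\<in>{i. F i \<noteq> 0}. F i * (Dop \<sigma> \<delta> a ^^ i) b)"

definition Kset :: "('a::division_ring \<Rightarrow> 'a) \<Rightarrow> ('a \<Rightarrow> 'a) \<Rightarrow> 'a \<Rightarrow> 'a set" where
  "Kset \<sigma> \<delta> a = {b. Dop \<sigma> \<delta> a b = a * b}"

definition Cls :: "('a::division_ring \<Rightarrow> 'a) \<Rightarrow> ('a \<Rightarrow> 'a) \<Rightarrow> 'a \<Rightarrow> 'a set" where
  "Cls \<sigma> \<delta> a = {Dop \<sigma> \<delta> a b * inverse b | b. b \<noteq> 0}"

definition interp :: "('a::division_ring \<Rightarrow> 'a) \<Rightarrow> ('a \<Rightarrow> 'a) \<Rightarrow> 'a set \<Rightarrow> nat \<Rightarrow> ('a \<Rightarrow> 'a) \<Rightarrow> nat \<Rightarrow> 'a" where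
  "interp \<sigma> \<delta> A n f = (THE F. F \<in> skpolys_lt n \<and> Eval_on \<sigma> \<delta> A F = f)"

definition pi_AB :: "('a::division_ring \<Rightarrow> 'a) \<Rightarrow> ('a \<Rightarrow> 'a) \<Rightarrow> 'a set \<Rightarrow> 'a set \<Rightarrow> nat \<Rightarrow> ('a \<Rightarrow> 'a) \<Rightarrow> 'a \<Rightarrow> 'a" where
  "pi_AB \<sigma> \<delta> A B n f = Eval_on \<sigma> \<delta> B (interp \<sigma> \<delta> A n f)"

text \<open>F^n = F^{n_1} x ... x F^{n_l}, coordinates indexed by block (i,j), i < l, j < n_i.\<close>
definition blockvecs :: "nat \<Rightarrow> (nat \<Rightarrow> nat) \<Rightarrow> (nat \<times> nat \<Rightarrow> 'a::zero) set" where
  "blockvecs l nn = {c. \<forall>i j. \<not> (i < l \<and> j < nn i) \<longrightarrow> c (i, j) = 0}"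

definition phi :: "('a::division_ring \<Rightarrow> 'a) \<Rightarrow> ('a \<Rightarrow> 'a) \<Rightarrow> nat \<Rightarrow> (nat \<Rightarrow> 'a) \<Rightarrow> 'a set
     \<Rightarrow> (nat \<Rightarrow> nat \<Rightarrow> 'a) \<Rightarrow> nat \<Rightarrow> ('a \<Rightarrow> 'a) \<Rightarrow> nat \<times> nat \<Rightarrow> 'a" where
  "phi \<sigma> \<delta> l a X \<alpha> n f = (\<lambda>(i, j). if i < l \<and> j < card (X \<inter> Cls \<sigma> \<delta> (a i))
      then Dapply \<sigma> \<delta> (interp \<sigma> \<delta> X n f) (a i) (\<alpha> i j) else 0)"

text \<open>pi_M(c) = c M with M = diag(M_1,...,M_l).\<close>
definition piM :: "nat \<Rightarrow> (nat \<Rightarrow> nat) \<Rightarrow> (nat \<Rightarrow> nat \<Rightarrow> nat \<Rightarrow> 'a::division_ring) \<Rightarrow> (nat \<times> nat \<Rightarrow> 'a) \<Rightarrow> nat \<times> nat \<Rightarrow> 'a" where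
  "piM l nn M c = (\<lambda>(i, k). if i < l \<and> k < nn i then (\<Sum>j<nn i. c (i, j) * M i j k) else 0)"

definition inv_matrix_in :: "'a::division_ring set \<Rightarrow> nat \<Rightarrow> (nat \<Rightarrow> nat \<Rightarrow> 'a) \<Rightarrow> bool" where
  "inv_matrix_in K m Mi \<longleftrightarrow> (\<forall>j<m. \<forall>k<m. Mi j k \<in> K) \<and>
     (\<exists>N. (\<forall>j<m. \<forall>k<m. N j k \<in> K) \<and>
        (\<forall>j<m. \<forall>k<m. (\<Sum>l<m. Mi j l * N l k) = (if j = k then 1 else 0)) \<and>
        (\<forall>j<m. \<forall>k<m. (\<Sum>l<m. N j l * Mi l k) = (if j = k then 1 else 0)))"

definition left_iso :: "('b \<Rightarrow> 'a::division_ring) set \<Rightarrow> ('c \<Rightarrow> 'a) set \<Rightarrow> (('b \<Rightarrow> 'a) \<Rightarrow> ('c \<Rightarrow> 'a)) \<Rightarrow> bool" where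
  "left_iso V W h \<longleftrightarrow> bij_betw h V W \<and>
     (\<forall>f\<in>V. \<forall>g\<in>V. h (\<lambda>x. f x + g x) = (\<lambda>y. h f y + h g y)) \<and>
     (\<forall>c. \<forall>f\<in>V. h (\<lambda>x. c * f x) = (\<lambda>y. c * h f y))"

end

theory Submission
  imports Defs
begin



locale skew =
  fixes \<sigma> \<delta> :: "'a::division_ring \<Rightarrow> 'a"
  assumes endo: "ring_endo \<sigma>" and der: "sigma_derivation \<sigma> \<delta>"
begin

lemma s_add: "\<sigma> (x + y) = \<sigma> x + \<sigma> y" using endo by (simp add: ring_endo_def)
lemma s_mult: "\<sigma> (x * y) = \<sigma> x * \<sigma> y" using endo by (simp add: ring_endo_def)
lemma s_one[simp]: "\<sigma> 1 = 1" using endo by (simp add: ring_endo_def)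
lemma s_zero[simp]: "\<sigma> 0 = 0"
proof -
  have "\<sigma> (0 + 0) = \<sigma> 0 + \<sigma> 0" by (rule s_add)
  then show ?thesis by simp
qed
lemma d_add: "\<delta> (x + y) = \<delta> x + \<delta> y" using der by (simp add: sigma_derivation_def)
lemma d_mult: "\<delta> (x * y) = \<sigma> x * \<delta> y + \<delta> x * y" using der by (simp add: sigma_derivation_def)
lemma d_zero[simp]: "\<delta> 0 = 0"
proof -
  have "\<delta> (0 + 0) = \<delta> 0 + \<delta> 0" by (rule d_add)
  then show ?thesis by simp
qed
lemma d_one[simp]: "\<delta> 1 = 0"
proof -
  have "\<delta> (1 * 1) = \<sigma> 1 * \<delta> 1 + \<delta> 1 * 1" by (rule d_mult)
  then show ?thesis by simp
qed
lemma s_nz: "x \<noteq> 0 \<Longrightarrow> \<sigma> x \<noteq> 0"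
proof
  assume "x \<noteq> 0" "\<sigma> x = 0"
  have "\<sigma> (x * inverse x) = \<sigma> x * \<sigma> (inverse x)" by (rule s_mult)
  with \<open>x \<noteq> 0\<close> \<open>\<sigma> x = 0\<close> show False by simp
qed

abbreviation D where "D \<equiv> Dop \<sigma> \<delta>"

lemma D_add: "D a (x + y) = D a x + D a y"
  by (simp add: Dop_def s_add d_add algebra_simps)
lemma D_zero[simp]: "D a 0 = 0" by (simp add: Dop_def)
lemma D_one[simp]: "D a 1 = a" by (simp add: Dop_def)
lemma D_mult: "D a (x * y) = \<sigma> x * D a y + \<delta> x * y"
  by (simp add: Dop_def s_mult d_mult algebra_simps)
lemma D_minus: "D a (- x) = - D a x"
proof -
  have "D a (x + - x) = D a x + D a (- x)" by (rule D_add)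
  then have "D a (- x) + D a x = 0" by (simp add: add.commute)
  then show ?thesis by (simp add: add_eq_0_iff2)
qed
lemma D_diff: "D a (x - y) = D a x - D a y"
  using D_add[of a x "- y"] D_minus[of a y] by simp

lemma Dp_add: "(D a ^^ i) (x + y) = (D a ^^ i) x + (D a ^^ i) y"
  by (induction i) (simp_all add: D_add)
lemma Dp_zero[simp]: "(D a ^^ i) 0 = 0"
  by (induction i) simp_all
lemma Dp_diff: "(D a ^^ i) (x - y) = (D a ^^ i) x - (D a ^^ i) y"
  by (induction i) (simp_all add: D_diff)
lemma Dp_sum: "(D a ^^ i) (\<Sum>j\<in>J. g j) = (\<Sum>j\<in>J. (D a ^^ i) (g j))"
  using sum_comp_morphism[of "D a ^^ i" g J, OF Dp_zero Dp_add] by (simp add: o_def)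

lemma K_iff: "k \<in> Kset \<sigma> \<delta> a \<longleftrightarrow> D a k = a * k" by (simp add: Kset_def)
lemma D_rK: "k \<in> Kset \<sigma> \<delta> a \<Longrightarrow> D a (w * k) = D a w * k"
proof -
  assume "k \<in> Kset \<sigma> \<delta> a"
  then have k: "D a k = a * k" by (simp add: K_iff)
  have "D a (w * k) = \<sigma> w * D a k + \<delta> w * k" by (rule D_mult)
  also have "\<dots> = (\<sigma> w * a + \<delta> w) * k" by (simp add: k algebra_simps)
  finally show ?thesis by (simp add: Dop_def)
qed
lemma Dp_rK: "k \<in> Kset \<sigma> \<delta> a \<Longrightarrow> (D a ^^ i) (w * k) = (D a ^^ i) w * k"
  by (induction i) (simp_all add: D_rK)
lemma K_zero[simp]: "0 \<in> Kset \<sigma> \<delta> a" by (simp add: K_iff)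
lemma K_one[simp]: "1 \<in> Kset \<sigma> \<delta> a" by (simp add: K_iff)
lemma K_add: "x \<in> Kset \<sigma> \<delta> a \<Longrightarrow> y \<in> Kset \<sigma> \<delta> a \<Longrightarrow> x + y \<in> Kset \<sigma> \<delta> a"
  by (simp add: K_iff D_add algebra_simps)
lemma K_diff: "x \<in> Kset \<sigma> \<delta> a \<Longrightarrow> y \<in> Kset \<sigma> \<delta> a \<Longrightarrow> x - y \<in> Kset \<sigma> \<delta> a"
  by (simp add: K_iff D_diff algebra_simps)
lemma K_minus: "x \<in> Kset \<sigma> \<delta> a \<Longrightarrow> - x \<in> Kset \<sigma> \<delta> a"
  by (simp add: K_iff D_minus)
lemma K_mult: "x \<in> Kset \<sigma> \<delta> a \<Longrightarrow> y \<in> Kset \<sigma> \<delta> a \<Longrightarrow> x * y \<in> Kset \<sigma> \<delta> a"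
  using D_rK[of y a x] by (simp add: K_iff mult.assoc)
lemma K_sum: "(\<And>j. j \<in> J \<Longrightarrow> g j \<in> Kset \<sigma> \<delta> a) \<Longrightarrow> (\<Sum>j\<in>J. g j) \<in> Kset \<sigma> \<delta> a"
  by (induction J rule: infinite_finite_induct) (auto intro: K_add)
lemma K_if: "(if P then 1 else 0) \<in> Kset \<sigma> \<delta> a" by simp

end



lemma lt_iff: "F \<in> skpolys_lt N \<longleftrightarrow> (\<forall>i\<ge>N. F i = 0)" by (simp add: skpolys_lt_def)
lemma lt_mono: "F \<in> skpolys_lt N \<Longrightarrow> N \<le> M \<Longrightarrow> F \<in> skpolys_lt M" by (simp add: skpolys_lt_def)
lemma lt_polys: "F \<in> skpolys_lt N \<Longrightarrow> F \<in> skpolys"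
proof -
  assume "F \<in> skpolys_lt N"
  then have "{i. F i \<noteq> 0} \<subseteq> {..<N}" by (auto simp: lt_iff not_less[symmetric])
  then show ?thesis unfolding skpolys_def by (auto intro: finite_subset)
qed
lemma polys_lt: "F \<in> skpolys \<Longrightarrow> \<exists>N. F \<in> skpolys_lt N"
proof -
  assume "F \<in> skpolys"
  then have "finite {i. F i \<noteq> 0}" by (simp add: skpolys_def)
  then obtain N where "\<forall>i\<in>{i. F i \<noteq> 0}. i < N" using finite_nat_set_iff_bounded by blast
  then show ?thesis by (auto simp: lt_iff) (meson leD)
qed

context skew begin

lemma Dapply_lt: "F \<in> skpolys_lt N \<Longrightarrow> Dapply \<sigma> \<delta> F a b = (\<Sum>i<N. F i * (D a ^^ i) b)"
proof -
  assume F: "F \<in> skpolys_lt N"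
  then have sub: "{i. F i \<noteq> 0} \<subseteq> {..<N}" by (auto simp: lt_iff not_less[symmetric])
  show ?thesis unfolding Dapply_def
    by (rule sum.mono_neutral_left) (use sub in auto)
qed

lemma skmult_lt: "G \<in> skpolys_lt N \<Longrightarrow> skmult \<sigma> \<delta> G H = (\<lambda>k. \<Sum>i<N. G i * (skxmul \<sigma> \<delta> ^^ i) H k)"
proof -
  assume F: "G \<in> skpolys_lt N"
  then have sub: "{i. G i \<noteq> 0} \<subseteq> {..<N}" by (auto simp: lt_iff not_less[symmetric])
  show ?thesis unfolding skmult_def
    by (rule ext, rule sum.mono_neutral_left) (use sub in auto)
qed

lemma Dapply_pt_add: "Dapply \<sigma> \<delta> F a (x + y) = Dapply \<sigma> \<delta> F a x + Dapply \<sigma> \<delta> F a y"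
  by (simp add: Dapply_def Dp_add distrib_left sum.distrib)
lemma Dapply_pt_zero[simp]: "Dapply \<sigma> \<delta> F a 0 = 0"
  by (simp add: Dapply_def)
lemma Dapply_pt_diff: "Dapply \<sigma> \<delta> F a (x - y) = Dapply \<sigma> \<delta> F a x - Dapply \<sigma> \<delta> F a y"
  by (simp add: Dapply_def Dp_diff right_diff_distrib sum_subtractf)
lemma Dapply_pt_sum: "Dapply \<sigma> \<delta> F a (\<Sum>j\<in>J. g j) = (\<Sum>j\<in>J. Dapply \<sigma> \<delta> F a (g j))"
  using sum_comp_morphism[of "Dapply \<sigma> \<delta> F a" g J, OF Dapply_pt_zero Dapply_pt_add] by (simp add: o_def)
lemma Dapply_pt_K: "k \<in> Kset \<sigma> \<delta> a \<Longrightarrow> Dapply \<sigma> \<delta> F a (w * k) = Dapply \<sigma> \<delta> F a w * k"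
  by (simp add: Dapply_def Dp_rK sum_distrib_right mult.assoc)

lemma Dapply_lin:
  assumes "F \<in> skpolys_lt N" "G \<in> skpolys_lt N"
  shows "Dapply \<sigma> \<delta> (\<lambda>k. u * F k + v * G k) a y = u * Dapply \<sigma> \<delta> F a y + v * Dapply \<sigma> \<delta> G a y"
proof -
  have "(\<lambda>k. u * F k + v * G k) \<in> skpolys_lt N" using assms by (simp add: lt_iff)
  then show ?thesis using assms
    by (simp add: Dapply_lt distrib_right sum.distrib sum_distrib_left mult.assoc)
qed

lemma Dapply_sum:
  assumes "finite I" "\<And>i. i \<in> I \<Longrightarrow> X i \<in> skpolys_lt N"
  shows "Dapply \<sigma> \<delta> (\<lambda>k. \<Sum>i\<in>I. c i * X i k) a y = (\<Sum>i\<in>I. c i * Dapply \<sigma> \<delta> (X i) a y)"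
proof -
  have "(\<lambda>k. \<Sum>i\<in>I. c i * X i k) \<in> skpolys_lt N" using assms by (simp add: lt_iff)
  then have "Dapply \<sigma> \<delta> (\<lambda>k. \<Sum>i\<in>I. c i * X i k) a y = (\<Sum>k<N. (\<Sum>i\<in>I. c i * X i k) * (D a ^^ k) y)"
    by (rule Dapply_lt)
  also have "\<dots> = (\<Sum>i\<in>I. c i * (\<Sum>k<N. X i k * (D a ^^ k) y))"
    by (simp add: sum_distrib_right sum_distrib_left mult.assoc sum.swap[of _ I])
  also have "\<dots> = (\<Sum>i\<in>I. c i * Dapply \<sigma> \<delta> (X i) a y)"
    by (rule sum.cong) (simp_all add: Dapply_lt[OF assms(2)])
  finally show ?thesis .
qed

lemma Dapply_lt1: "F \<in> skpolys_lt 1 \<Longrightarrow> Dapply \<sigma> \<delta> F a y = F 0 * y"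
  by (simp add: Dapply_lt)

abbreviation X where "X \<equiv> skxmul \<sigma> \<delta>"

lemma skxmul_lt: "H \<in> skpolys_lt N \<Longrightarrow> X H \<in> skpolys_lt (Suc N)"
  by (auto simp: lt_iff skxmul_def)
lemma skxpow_lt: "H \<in> skpolys_lt N \<Longrightarrow> (X ^^ m) H \<in> skpolys_lt (N + m)"
  by (induction m) (simp_all add: skxmul_lt)
lemma skxmul_top: "H \<in> skpolys_lt (Suc d) \<Longrightarrow> X H (Suc d) = \<sigma> (H d)"
  by (simp add: lt_iff skxmul_def)
lemma skxpow_top: "H \<in> skpolys_lt (Suc d) \<Longrightarrow> H d = 1 \<Longrightarrow> (X ^^ m) H (d + m) = 1"
proof (induction m)
  case 0 then show ?case by simp
next
  case (Suc m)
  have "(X ^^ m) H \<in> skpolys_lt (Suc (d + m))" using skxpow_lt[OF Suc.prems(1), of m] by simp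
  then show ?case using Suc by (simp add: skxmul_top)
qed

lemma Dapply_X:
  assumes H: "H \<in> skpolys_lt N"
  shows "Dapply \<sigma> \<delta> (X H) a b = D a (Dapply \<sigma> \<delta> H a b)"
proof -
  have "Dapply \<sigma> \<delta> (X H) a b = (\<Sum>k<Suc N. X H k * (D a ^^ k) b)"
    by (rule Dapply_lt[OF skxmul_lt[OF H]])
  also have "\<dots> = (\<Sum>k<Suc N. (if k = 0 then 0 else \<sigma> (H (k - 1)) * (D a ^^ k) b)) + (\<Sum>k<Suc N. \<delta> (H k) * (D a ^^ k) b)"
    unfolding sum.distrib[symmetric] by (rule sum.cong) (simp_all add: skxmul_def distrib_right)
  also have "(\<Sum>k<Suc N. (if k = 0 then 0 else \<sigma> (H (k - 1)) * (D a ^^ k) b)) = (\<Sum>k<N. \<sigma> (H k) * (D a ^^ Suc k) b)"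
    by (subst sum.lessThan_Suc_shift) simp
  also have "(\<Sum>k<Suc N. \<delta> (H k) * (D a ^^ k) b) = (\<Sum>k<N. \<delta> (H k) * (D a ^^ k) b)"
    using H by (simp add: lt_iff)
  also have "(\<Sum>k<N. \<sigma> (H k) * (D a ^^ Suc k) b) + (\<Sum>k<N. \<delta> (H k) * (D a ^^ k) b)
      = (\<Sum>k<N. D a (H k * (D a ^^ k) b))"
    by (simp add: D_mult sum.distrib)
  also have "\<dots> = D a (\<Sum>k<N. H k * (D a ^^ k) b)"
    using Dp_sum[where i=1 and a=a and g="\<lambda>k. H k * (D a ^^ k) b" and J="{..<N}"] by simp
  also have "\<dots> = D a (Dapply \<sigma> \<delta> H a b)" using H by (simp add: Dapply_lt)
  finally show ?thesis .
qed

lemma Dapply_Xpow: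
  assumes H: "H \<in> skpolys_lt N"
  shows "Dapply \<sigma> \<delta> ((X ^^ m) H) a b = (D a ^^ m) (Dapply \<sigma> \<delta> H a b)"
proof (induction m)
  case 0 then show ?case by simp
next
  case (Suc m)
  show ?case using Dapply_X[OF skxpow_lt[OF H, of m]] Suc by simp
qed

lemma skmult_bound: "G \<in> skpolys_lt N \<Longrightarrow> H \<in> skpolys_lt M \<Longrightarrow> skmult \<sigma> \<delta> G H \<in> skpolys_lt (M + N)"
proof -
  assume G: "G \<in> skpolys_lt N" and H: "H \<in> skpolys_lt M"
  have "\<forall>i<N. (X ^^ i) H \<in> skpolys_lt (M + N)"
    by (auto intro!: lt_mono[OF skxpow_lt[OF H]])
  then show ?thesis by (simp add: skmult_lt[OF G] lt_iff)
qed

lemma Dapply_skmult: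
  assumes G: "G \<in> skpolys_lt N" and H: "H \<in> skpolys_lt M"
  shows "Dapply \<sigma> \<delta> (skmult \<sigma> \<delta> G H) a b = Dapply \<sigma> \<delta> G a (Dapply \<sigma> \<delta> H a b)"
proof -
  have "Dapply \<sigma> \<delta> (skmult \<sigma> \<delta> G H) a b = Dapply \<sigma> \<delta> (\<lambda>k. \<Sum>i<N. G i * (X ^^ i) H k) a b"
    by (simp add: skmult_lt[OF G])
  also have "\<dots> = (\<Sum>i<N. G i * Dapply \<sigma> \<delta> ((X ^^ i) H) a b)"
    by (rule Dapply_sum[where N="M+N"]) (auto intro!: lt_mono[OF skxpow_lt[OF H]])
  also have "\<dots> = Dapply \<sigma> \<delta> G a (Dapply \<sigma> \<delta> H a b)"
    by (simp add: Dapply_Xpow[OF H] Dapply_lt[OF G])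
  finally show ?thesis .
qed

end



context skew begin

lemma skmult_zero: "skmult \<sigma> \<delta> (\<lambda>_. 0) H = (\<lambda>k. 0)"
  by (simp add: skmult_def)

lemma division:
  assumes P: "P \<in> skpolys_lt (Suc d)" "P d = 1"
  shows "F \<in> skpolys_lt N \<Longrightarrow> \<exists>Q R. Q \<in> skpolys_lt (N - d) \<and> R \<in> skpolys_lt d \<and>
            F = (\<lambda>k. skmult \<sigma> \<delta> Q P k + R k)"
proof (induction N arbitrary: F)
  case 0
  show ?case
    by (rule exI[of _ "\<lambda>_. 0"], rule exI[of _ F]) (use 0 in \<open>auto simp: skmult_zero lt_iff\<close>)
next
  case (Suc m)
  show ?case
  proof (cases "m < d")
    case True
    show ?thesis
      by (rule exI[of _ "\<lambda>_. 0"], rule exI[of _ F]) (use Suc.prems True in \<open>auto simp: skmult_zero lt_iff\<close>)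
  next
    case False
    define c where "c = F m"
    define Y where "Y = (X ^^ (m - d)) P"
    have Ylt: "Y \<in> skpolys_lt (Suc m)" using skxpow_lt[OF P(1), of "m - d"] False by (simp add: Y_def)
    have Ym: "Y m = 1" using skxpow_top[OF P, of "m - d"] False by (simp add: Y_def)
    define F' where "F' = (\<lambda>k. F k - c * Y k)"
    have "F' \<in> skpolys_lt m"
    proof -
      { fix k assume "k \<ge> m"
        then have "F' k = 0"
        proof (cases "k = m")
          case True then show ?thesis by (simp add: F'_def c_def Ym)
        next
          case False
          with \<open>k \<ge> m\<close> have "k \<ge> Suc m" by simp
          then show ?thesis using Suc.prems Ylt by (simp add: F'_def lt_iff)
        qed }
      then show ?thesis by (simp add: lt_iff)
    qed
    from Suc.IH[OF this] obtain Q' R' where Q': "Q' \<in> skpolys_lt (m - d)" and R': "R' \<in> skpolys_lt d"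
      and eq: "F' = (\<lambda>k. skmult \<sigma> \<delta> Q' P k + R' k)" by blast
    define Q where "Q = (\<lambda>i. if i = m - d then c else Q' i)"
    have Qlt: "Q \<in> skpolys_lt (Suc (m - d))" using Q' by (auto simp: lt_iff Q_def)
    have "skmult \<sigma> \<delta> Q P = (\<lambda>k. \<Sum>i<Suc (m - d). Q i * (X ^^ i) P k)" by (rule skmult_lt[OF Qlt])
    also have "\<dots> = (\<lambda>k. (\<Sum>i<m - d. Q' i * (X ^^ i) P k) + c * Y k)"
      by (simp add: Q_def Y_def)
    also have "\<dots> = (\<lambda>k. skmult \<sigma> \<delta> Q' P k + c * Y k)" by (simp add: skmult_lt[OF Q'])
    finally have mq: "skmult \<sigma> \<delta> Q P = (\<lambda>k. skmult \<sigma> \<delta> Q' P k + c * Y k)" .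
    have "F = (\<lambda>k. F' k + c * Y k)" by (simp add: F'_def)
    also have "\<dots> = (\<lambda>k. skmult \<sigma> \<delta> Q P k + R' k)" by (simp add: eq mq algebra_simps)
    finally show ?thesis using Qlt R' False by (intro exI[of _ Q] exI[of _ R']) (simp add: Suc_diff_le)
  qed
qed

lemma Xm_lt: "skXminus c \<in> skpolys_lt 2" by (simp add: lt_iff skXminus_def)
lemma Dapply_Xm: "Dapply \<sigma> \<delta> (skXminus c) a y = D a y - c * y"
  by (subst Dapply_lt[OF Xm_lt]) (simp add: skXminus_def numeral_2_eq_2)
lemma skmult_Xm: "skmult \<sigma> \<delta> (skXminus c) P = (\<lambda>k. X P k - c * P k)"
  by (subst skmult_lt[OF Xm_lt]) (simp add: skXminus_def numeral_2_eq_2)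

lemma const_lt: "skconst c \<in> skpolys_lt 1" by (simp add: lt_iff skconst_def)

lemma skeval_eq:
  assumes F: "F \<in> skpolys"
  shows "skeval \<sigma> \<delta> F c = Dapply \<sigma> \<delta> F c 1"
proof -
  obtain N where FN: "F \<in> skpolys_lt N" using polys_lt[OF F] by blast
  have Xm1: "skXminus c \<in> skpolys_lt (Suc 1)" "skXminus c 1 = 1" by (simp_all add: skXminus_def lt_iff)
  obtain Q R where Q: "Q \<in> skpolys_lt (N - 1)" and R: "R \<in> skpolys_lt 1"
    and eq: "F = (\<lambda>k. skmult \<sigma> \<delta> Q (skXminus c) k + R k)"
    using division[OF Xm1 FN] by blast
  have QP: "skmult \<sigma> \<delta> Q (skXminus c) \<in> skpolys_lt (2 + (N - 1))" by (rule skmult_bound[OF Q Xm_lt])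
  have QP': "skmult \<sigma> \<delta> Q (skXminus c) \<in> skpolys_lt (2 + (N - 1) + 1)" by (rule lt_mono[OF QP]) simp
  have R': "R \<in> skpolys_lt (2 + (N - 1) + 1)" by (rule lt_mono[OF R]) simp
  have van: "Dapply \<sigma> \<delta> (skmult \<sigma> \<delta> G (skXminus c)) c 1 = 0" if "G \<in> skpolys_lt M" for G M
    using Dapply_skmult[OF that Xm_lt] by (simp add: Dapply_Xm)
  have "Dapply \<sigma> \<delta> F c 1 = Dapply \<sigma> \<delta> (\<lambda>k. 1 * skmult \<sigma> \<delta> Q (skXminus c) k + 1 * R k) c 1"
    by (subst eq) simp
  also have "\<dots> = R 0"
    by (simp only: Dapply_lin[OF QP' R'] van[OF Q] Dapply_lt1[OF R]) simp
  finally have r: "Dapply \<sigma> \<delta> F c 1 = R 0" .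
  have Rk: "R k = skconst (R 0) k" for k using R by (auto simp: lt_iff skconst_def)
  have ex: "(\<lambda>k. F k - skconst (Dapply \<sigma> \<delta> F c 1) k) = skmult \<sigma> \<delta> Q (skXminus c)"
  proof
    fix k show "F k - skconst (Dapply \<sigma> \<delta> F c 1) k = skmult \<sigma> \<delta> Q (skXminus c) k"
      using fun_cong[OF eq, of k] Rk[of k] r by simp
  qed
  show ?thesis unfolding skeval_def
  proof (rule the_equality)
    show "\<exists>G\<in>skpolys. (\<lambda>k. F k - skconst (Dapply \<sigma> \<delta> F c 1) k) = skmult \<sigma> \<delta> G (skXminus c)"
      using ex lt_polys[OF Q] by blast
  next
    fix r' assume "\<exists>G\<in>skpolys. (\<lambda>k. F k - skconst r' k) = skmult \<sigma> \<delta> G (skXminus c)"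
    then obtain G where G: "G \<in> skpolys" and Geq: "(\<lambda>k. F k - skconst r' k) = skmult \<sigma> \<delta> G (skXminus c)" by blast
    obtain M where GM: "G \<in> skpolys_lt M" using polys_lt[OF G] by blast
    have FN': "F \<in> skpolys_lt (N + 1)" by (rule lt_mono[OF FN]) simp
    have C': "skconst r' \<in> skpolys_lt (N + 1)" by (rule lt_mono[OF const_lt]) simp
    have "0 = Dapply \<sigma> \<delta> (\<lambda>k. 1 * F k + (-1) * skconst r' k) c 1"
      using van[OF GM] Geq by simp
    also have "\<dots> = Dapply \<sigma> \<delta> F c 1 - r'"
      by (simp only: Dapply_lin[OF FN' C'] Dapply_lt1[OF const_lt]) (simp add: skconst_def)
    finally show "r' = Dapply \<sigma> \<delta> F c 1" by simp
  qed
qed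

definition cj where "cj a b = D a b * inverse b"

lemma D_conj: "b \<noteq> 0 \<Longrightarrow> D a (w * b) = D (cj a b) w * b"
proof -
  assume b: "b \<noteq> 0"
  have e: "D a b * inverse b * b = D a b" using b by (simp add: mult.assoc)
  have "D a (w * b) = \<sigma> w * D a b + \<delta> w * b" by (rule D_mult)
  also have "\<dots> = (\<sigma> w * (D a b * inverse b) + \<delta> w) * b"
    by (metis e distrib_right mult.assoc)
  finally show ?thesis by (simp add: Dop_def cj_def)
qed

lemma Dp_conj: "b \<noteq> 0 \<Longrightarrow> (D (cj a b) ^^ i) 1 = (D a ^^ i) b * inverse b"
proof (induction i)
  case 0 then show ?case by simp
next
  case (Suc i)
  have "D a ((D a ^^ i) b) = D a (((D a ^^ i) b * inverse b) * b)" using Suc.prems by (simp add: mult.assoc)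
  also have "\<dots> = D (cj a b) ((D a ^^ i) b * inverse b) * b" by (rule D_conj[OF Suc.prems])
  finally show ?case using Suc by (simp add: mult.assoc)
qed

lemma Dapply_conj: "b \<noteq> 0 \<Longrightarrow> Dapply \<sigma> \<delta> F (cj a b) 1 = Dapply \<sigma> \<delta> F a b * inverse b"
  by (simp add: Dapply_def Dp_conj sum_distrib_right mult.assoc)

lemma Dapply_conj': "b \<noteq> 0 \<Longrightarrow> Dapply \<sigma> \<delta> F a b = Dapply \<sigma> \<delta> F (cj a b) 1 * b"
  by (simp add: Dapply_conj mult.assoc)

lemma cj_nz: "b \<noteq> 0 \<Longrightarrow> cj a b \<in> Cls \<sigma> \<delta> a" by (auto simp: Cls_def cj_def)
lemma Cls_iff: "x \<in> Cls \<sigma> \<delta> a \<longleftrightarrow> (\<exists>b. b \<noteq> 0 \<and> x = cj a b)" by (auto simp: Cls_def cj_def)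

lemma cls_refl: "a \<in> Cls \<sigma> \<delta> a"
  using cj_nz[of 1 a] by (simp add: cj_def)

lemma cls_trans: "x \<in> Cls \<sigma> \<delta> y \<Longrightarrow> z \<in> Cls \<sigma> \<delta> x \<Longrightarrow> z \<in> Cls \<sigma> \<delta> y"
proof -
  assume "x \<in> Cls \<sigma> \<delta> y" "z \<in> Cls \<sigma> \<delta> x"
  then obtain b g where b: "b \<noteq> 0" "x = cj y b" and g: "g \<noteq> 0" "z = cj x g" by (auto simp: Cls_iff)
  have "D y (g * b) = D x g * b" using D_conj[OF b(1)] b(2) by simp
  have bb: "b * (inverse b * inverse g) = inverse g" using b(1) by (simp add: mult.assoc[symmetric])
  then have "cj y (g * b) = D x g * (b * inverse b) * inverse g"
    using b g \<open>D y (g * b) = D x g * b\<close> by (simp add: cj_def nonzero_inverse_mult_distrib mult.assoc)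
  then have "cj y (g * b) = z" using b g by (simp add: cj_def)
  moreover have "g * b \<noteq> 0" using b g by simp
  ultimately show ?thesis unfolding Cls_iff by (intro exI[of _ "g * b"]) simp
qed

lemma cls_sym: "x \<in> Cls \<sigma> \<delta> y \<Longrightarrow> y \<in> Cls \<sigma> \<delta> x"
proof -
  assume "x \<in> Cls \<sigma> \<delta> y"
  then obtain b where b: "b \<noteq> 0" "x = cj y b" by (auto simp: Cls_iff)
  have "D y (inverse b * b) = D x (inverse b) * b" using D_conj[OF b(1)] b(2) by simp
  then have "D x (inverse b) = y * inverse b" using b(1)
    by (metis D_one mult.assoc left_inverse right_inverse mult_1_right)
  then have "cj x (inverse b) = y" using b(1) by (simp add: cj_def mult.assoc)
  then show ?thesis unfolding Cls_iff by (intro exI[of _ "inverse b"]) (simp add: b)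
qed

lemma cls_eq: "x \<in> Cls \<sigma> \<delta> y \<Longrightarrow> Cls \<sigma> \<delta> x = Cls \<sigma> \<delta> y"
  by (meson cls_sym cls_trans subset_antisym subsetI)

lemma closure_iff: "b \<in> P_closure \<sigma> \<delta> S \<longleftrightarrow>
   (\<forall>F\<in>skpolys. (\<forall>c\<in>S. Dapply \<sigma> \<delta> F c 1 = 0) \<longrightarrow> Dapply \<sigma> \<delta> F b 1 = 0)"
  by (simp add: P_closure_def skeval_eq)

lemma closure_mono: "S \<subseteq> T \<Longrightarrow> P_closure \<sigma> \<delta> S \<subseteq> P_closure \<sigma> \<delta> T"
  by (auto simp: P_closure_def)

lemma indep_subset: "P_independent \<sigma> \<delta> S \<Longrightarrow> T \<subseteq> S \<Longrightarrow> P_independent \<sigma> \<delta> T"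
  unfolding P_independent_def using closure_mono[of "T - {_}" "S - {_}"] by blast

end



context skew begin

lemma Dapply_const1: "Dapply \<sigma> \<delta> (skconst 1) c y = y"
  by (subst Dapply_lt1[OF const_lt]) (simp add: skconst_def)

lemma exist_monic: "finite S \<Longrightarrow> \<exists>P. P \<in> skpolys_lt (Suc (card S)) \<and> P (card S) = 1 \<and>
   (\<forall>c\<in>S. Dapply \<sigma> \<delta> P c 1 = 0) \<and> (\<forall>c. Dapply \<sigma> \<delta> P c 1 = 0 \<longrightarrow> (\<exists>s\<in>S. c \<in> Cls \<sigma> \<delta> s))"
proof (induction S rule: finite_induct)
  case empty
  show ?case
  proof (rule exI[of _ "skconst 1"], intro conjI)
    show "skconst 1 \<in> skpolys_lt (Suc (card {}))" using const_lt by simp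
    show "skconst 1 (card {}) = 1" by (simp add: skconst_def)
  qed (simp_all add: Dapply_const1)
next
  case (insert b S)
  then obtain P where P: "P \<in> skpolys_lt (Suc (card S))" "P (card S) = 1"
    "\<forall>c\<in>S. Dapply \<sigma> \<delta> P c 1 = 0" "\<forall>c. Dapply \<sigma> \<delta> P c 1 = 0 \<longrightarrow> (\<exists>s\<in>S. c \<in> Cls \<sigma> \<delta> s)" by blast
  define r where "r = Dapply \<sigma> \<delta> P b 1"
  define b' where "b' = (if r = 0 then b else cj b r)"
  define P' where "P' = skmult \<sigma> \<delta> (skXminus b') P"
  have P'eq: "P' = (\<lambda>k. X P k - b' * P k)" by (simp add: P'_def skmult_Xm)
  have ev: "Dapply \<sigma> \<delta> P' c 1 = D c (Dapply \<sigma> \<delta> P c 1) - b' * Dapply \<sigma> \<delta> P c 1" for c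
    unfolding P'_def by (simp add: Dapply_skmult[OF Xm_lt P(1)] Dapply_Xm)
  have XP: "X P \<in> skpolys_lt (Suc (Suc (card S)))" by (rule skxmul_lt[OF P(1)])
  have P2: "P \<in> skpolys_lt (Suc (Suc (card S)))" by (rule lt_mono[OF P(1)]) simp
  have lt': "P' \<in> skpolys_lt (Suc (card (insert b S)))"
    using XP P2 insert(1,2) by (simp add: P'eq lt_iff)
  have top: "P' (card (insert b S)) = 1"
    using insert(1,2) P(1) P(2) skxmul_top[OF P(1)] by (simp add: P'eq lt_iff)
  have van: "\<forall>c\<in>insert b S. Dapply \<sigma> \<delta> P' c 1 = 0"
  proof
    fix c assume "c \<in> insert b S"
    then show "Dapply \<sigma> \<delta> P' c 1 = 0"
    proof
      assume "c = b"
      show ?thesis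
      proof (cases "r = 0")
        case True then show ?thesis using \<open>c = b\<close> by (simp add: ev r_def)
      next
        case False
        then have "b' * r = D b r" by (simp add: b'_def cj_def mult.assoc)
        then show ?thesis using \<open>c = b\<close> by (simp add: ev r_def)
      qed
    next
      assume "c \<in> S" then show ?thesis using P(3) by (simp add: ev)
    qed
  qed
  have b'cls: "b' \<in> Cls \<sigma> \<delta> b" by (simp add: b'_def cls_refl cj_nz)
  have zer: "\<forall>c. Dapply \<sigma> \<delta> P' c 1 = 0 \<longrightarrow> (\<exists>s\<in>insert b S. c \<in> Cls \<sigma> \<delta> s)"
  proof (intro allI impI)
    fix c assume c0: "Dapply \<sigma> \<delta> P' c 1 = 0"
    define rc where "rc = Dapply \<sigma> \<delta> P c 1"
    show "\<exists>s\<in>insert b S. c \<in> Cls \<sigma> \<delta> s"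
    proof (cases "rc = 0")
      case True then show ?thesis using P(4) rc_def by auto
    next
      case False
      have "D c rc = b' * rc" using c0 by (simp add: ev rc_def)
      then have "b' = cj c rc" using False by (simp add: cj_def mult.assoc)
      then have "b' \<in> Cls \<sigma> \<delta> c" using False by (simp add: cj_nz)
      then have "c \<in> Cls \<sigma> \<delta> b'" by (rule cls_sym)
      then have "c \<in> Cls \<sigma> \<delta> b" using b'cls by (rule cls_trans[rotated])
      then show ?thesis by auto
    qed
  qed
  show ?case using lt' top van zer by blast
qed

lemma factor:
  assumes low: "\<forall>F \<in> skpolys_lt (card S). (\<forall>c\<in>S. Dapply \<sigma> \<delta> F c 1 = 0) \<longrightarrow> F = (\<lambda>_. 0)"
    and P: "P \<in> skpolys_lt (Suc (card S))" "P (card S) = 1" "\<forall>c\<in>S. Dapply \<sigma> \<delta> P c 1 = 0"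
    and H: "H \<in> skpolys_lt N" "\<forall>c\<in>S. Dapply \<sigma> \<delta> H c 1 = 0"
  shows "\<exists>Q. Q \<in> skpolys_lt (N - card S) \<and> H = skmult \<sigma> \<delta> Q P"
proof -
  obtain Q R where Q: "Q \<in> skpolys_lt (N - card S)" and R: "R \<in> skpolys_lt (card S)"
    and eq: "H = (\<lambda>k. skmult \<sigma> \<delta> Q P k + R k)" using division[OF P(1,2) H(1)] by blast
  define L where "L = Suc (card S) + (N - card S) + card S"
  have QP: "skmult \<sigma> \<delta> Q P \<in> skpolys_lt L"
    unfolding L_def by (rule lt_mono[OF skmult_bound[OF Q P(1)]]) simp
  have R': "R \<in> skpolys_lt L" unfolding L_def by (rule lt_mono[OF R]) simp
  have "\<forall>c\<in>S. Dapply \<sigma> \<delta> R c 1 = 0"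
  proof
    fix c assume c: "c \<in> S"
    have "0 = Dapply \<sigma> \<delta> (\<lambda>k. 1 * skmult \<sigma> \<delta> Q P k + 1 * R k) c 1" using H(2) c eq by simp
    also have "\<dots> = Dapply \<sigma> \<delta> R c 1"
      by (simp only: Dapply_lin[OF QP R'] Dapply_skmult[OF Q P(1)]) (simp add: P(3) c)
    finally show "Dapply \<sigma> \<delta> R c 1 = 0" by simp
  qed
  then have "R = (\<lambda>_. 0)" using low R by blast
  then show ?thesis using Q eq by auto
qed

lemma nonvanish:
  assumes low: "\<forall>F \<in> skpolys_lt (card S). (\<forall>c\<in>S. Dapply \<sigma> \<delta> F c 1 = 0) \<longrightarrow> F = (\<lambda>_. 0)"
    and P: "P \<in> skpolys_lt (Suc (card S))" "P (card S) = 1" "\<forall>c\<in>S. Dapply \<sigma> \<delta> P c 1 = 0"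
    and b: "b \<notin> P_closure \<sigma> \<delta> S"
  shows "Dapply \<sigma> \<delta> P b 1 \<noteq> 0"
proof
  assume Pb: "Dapply \<sigma> \<delta> P b 1 = 0"
  from b obtain H where H: "H \<in> skpolys" "\<forall>c\<in>S. Dapply \<sigma> \<delta> H c 1 = 0" "Dapply \<sigma> \<delta> H b 1 \<noteq> 0"
    by (auto simp: closure_iff)
  obtain N where HN: "H \<in> skpolys_lt N" using polys_lt[OF H(1)] by blast
  obtain Q where Q: "Q \<in> skpolys_lt (N - card S)" "H = skmult \<sigma> \<delta> Q P"
    using factor[OF low P HN H(2)] by blast
  have "Dapply \<sigma> \<delta> H b 1 = 0" using Q by (simp add: Dapply_skmult[OF Q(1) P(1)] Pb)
  with H(3) show False by simp
qed

lemma low_zero: "finite S \<Longrightarrow> P_independent \<sigma> \<delta> S \<Longrightarrow>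
  \<forall>F \<in> skpolys_lt (card S). (\<forall>c\<in>S. Dapply \<sigma> \<delta> F c 1 = 0) \<longrightarrow> F = (\<lambda>_. 0)"
proof (induction S rule: finite_induct)
  case empty
  then show ?case by (auto simp: lt_iff)
next
  case (insert b S)
  have indS: "P_independent \<sigma> \<delta> S" using indep_subset[OF insert(4)] by blast
  note IH = insert(3)[OF indS]
  have e: "insert b S - {b} = S" using insert(2) by auto
  have bS: "b \<notin> P_closure \<sigma> \<delta> S"
    using insert(4) unfolding P_independent_def using e by force
  obtain P where P: "P \<in> skpolys_lt (Suc (card S))" "P (card S) = 1" "\<forall>c\<in>S. Dapply \<sigma> \<delta> P c 1 = 0"
    using exist_monic[OF insert(1)] by blast
  have Pb: "Dapply \<sigma> \<delta> P b 1 \<noteq> 0" by (rule nonvanish[OF IH P bS])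
  show ?case
  proof (intro ballI impI)
    fix F assume F: "F \<in> skpolys_lt (card (insert b S))" and v: "\<forall>c\<in>insert b S. Dapply \<sigma> \<delta> F c 1 = 0"
    have F': "F \<in> skpolys_lt (Suc (card S))" using F insert(1,2) by simp
    obtain Q where Q: "Q \<in> skpolys_lt (Suc (card S) - card S)" "F = skmult \<sigma> \<delta> Q P"
      using factor[OF IH P F'] v by blast
    have Q1: "Q \<in> skpolys_lt 1" using Q(1) by simp
    have "0 = Dapply \<sigma> \<delta> F b 1" using v by simp
    also have "\<dots> = Q 0 * Dapply \<sigma> \<delta> P b 1"
      by (simp add: Q(2) Dapply_skmult[OF Q1 P(1)] Dapply_lt1[OF Q1])
    finally have "Q 0 = 0" using Pb by simp
    have "Q = (\<lambda>_. 0)"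
    proof
      fix i show "Q i = 0" by (cases i) (use Q1 \<open>Q 0 = 0\<close> in \<open>auto simp: lt_iff\<close>)
    qed
    then show "F = (\<lambda>_. 0)" using Q(2) by (simp add: skmult_zero)
  qed
qed

lemma interp_exists:
  assumes S: "finite S" "P_independent \<sigma> \<delta> S" and f: "f \<in> funspace S"
  shows "\<exists>F \<in> skpolys_lt (card S). Eval_on \<sigma> \<delta> S F = f"
proof -
  have "\<forall>b\<in>S. \<exists>P. P \<in> skpolys_lt (card S) \<and> Dapply \<sigma> \<delta> P b 1 \<noteq> 0 \<and> (\<forall>c\<in>S - {b}. Dapply \<sigma> \<delta> P c 1 = 0)"
  proof
    fix b assume b: "b \<in> S"
    have T: "finite (S - {b})" "P_independent \<sigma> \<delta> (S - {b})" using S indep_subset by auto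
    have bT: "b \<notin> P_closure \<sigma> \<delta> (S - {b})" using S(2) b by (simp add: P_independent_def)
    obtain P where P: "P \<in> skpolys_lt (Suc (card (S - {b})))" "P (card (S - {b})) = 1"
      "\<forall>c\<in>S - {b}. Dapply \<sigma> \<delta> P c 1 = 0" using exist_monic[OF T(1)] by blast
    have "Dapply \<sigma> \<delta> P b 1 \<noteq> 0" by (rule nonvanish[OF low_zero[OF T] P bT])
    moreover have "Suc (card (S - {b})) = card S" using b S(1)
      by (metis card_Suc_Diff1)
    ultimately show "\<exists>P. P \<in> skpolys_lt (card S) \<and> Dapply \<sigma> \<delta> P b 1 \<noteq> 0 \<and> (\<forall>c\<in>S - {b}. Dapply \<sigma> \<delta> P c 1 = 0)"
      using P by metis
  qed
  then obtain PP where PP: "\<And>b. b \<in> S \<Longrightarrow> PP b \<in> skpolys_lt (card S)"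
    "\<And>b. b \<in> S \<Longrightarrow> Dapply \<sigma> \<delta> (PP b) b 1 \<noteq> 0"
    "\<And>b c. b \<in> S \<Longrightarrow> c \<in> S - {b} \<Longrightarrow> Dapply \<sigma> \<delta> (PP b) c 1 = 0" by metis
  define F where "F = (\<lambda>k. \<Sum>b\<in>S. (f b * inverse (Dapply \<sigma> \<delta> (PP b) b 1)) * PP b k)"
  have Flt: "F \<in> skpolys_lt (card S)" using PP(1) by (simp add: F_def lt_iff)
  have "Eval_on \<sigma> \<delta> S F = f"
  proof
    fix c
    show "Eval_on \<sigma> \<delta> S F c = f c"
    proof (cases "c \<in> S")
      case False then show ?thesis using f by (simp add: Eval_on_def funspace_def)
    next
      case True
      have "Eval_on \<sigma> \<delta> S F c = Dapply \<sigma> \<delta> F c 1"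
        using True by (simp add: Eval_on_def skeval_eq[OF lt_polys[OF Flt]])
      also have "\<dots> = (\<Sum>b\<in>S. (f b * inverse (Dapply \<sigma> \<delta> (PP b) b 1)) * Dapply \<sigma> \<delta> (PP b) c 1)"
        unfolding F_def by (rule Dapply_sum[OF S(1) PP(1)])
      also have "\<dots> = (f c * inverse (Dapply \<sigma> \<delta> (PP c) c 1)) * Dapply \<sigma> \<delta> (PP c) c 1"
      proof -
        have z: "(\<Sum>b\<in>S - {c}. (f b * inverse (Dapply \<sigma> \<delta> (PP b) b 1)) * Dapply \<sigma> \<delta> (PP b) c 1) = 0"
          by (rule sum.neutral) (use True PP(3) in auto)
        show ?thesis using z by (simp add: sum.remove[OF S(1) True])
      qed
      also have "\<dots> = f c" using PP(2)[OF True] by (simp add: mult.assoc)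
      finally show ?thesis .
    qed
  qed
  then show ?thesis using Flt by blast
qed

lemma interp_unique:
  assumes S: "finite S" "P_independent \<sigma> \<delta> S"
    and F: "F \<in> skpolys_lt (card S)" and G: "G \<in> skpolys_lt (card S)"
    and eq: "Eval_on \<sigma> \<delta> S F = Eval_on \<sigma> \<delta> S G"
  shows "F = G"
proof -
  have "\<forall>c\<in>S. Dapply \<sigma> \<delta> (\<lambda>k. 1 * F k + (-1) * G k) c 1 = 0"
  proof
    fix c assume c: "c \<in> S"
    have "Eval_on \<sigma> \<delta> S F c = Eval_on \<sigma> \<delta> S G c" using eq by simp
    then have "Dapply \<sigma> \<delta> F c 1 = Dapply \<sigma> \<delta> G c 1"
      using c by (simp add: Eval_on_def skeval_eq[OF lt_polys[OF F]] skeval_eq[OF lt_polys[OF G]])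
    then show "Dapply \<sigma> \<delta> (\<lambda>k. 1 * F k + (-1) * G k) c 1 = 0"
      by (simp only: Dapply_lin[OF F G]) simp
  qed
  moreover have "(\<lambda>k. 1 * F k + (-1) * G k) \<in> skpolys_lt (card S)" using F G by (simp add: lt_iff)
  ultimately have "(\<lambda>k. 1 * F k + (-1) * G k) = (\<lambda>_. 0)" using low_zero[OF S] by blast
  then have "F k - G k = 0" for k by (metis (no_types) diff_conv_add_uminus mult_1 mult_minus1)
  then show ?thesis by auto
qed

lemma interp_prop:
  assumes S: "finite S" "P_independent \<sigma> \<delta> S" and f: "f \<in> funspace S" and n: "card S = n"
  shows "interp \<sigma> \<delta> S n f \<in> skpolys_lt n \<and> Eval_on \<sigma> \<delta> S (interp \<sigma> \<delta> S n f) = f"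
proof -
  obtain F where F: "F \<in> skpolys_lt n" "Eval_on \<sigma> \<delta> S F = f" using interp_exists[OF S f] n by blast
  have "interp \<sigma> \<delta> S n f = F" unfolding interp_def
    by (rule the_equality) (use F interp_unique[OF S] n in auto)
  then show ?thesis using F by simp
qed

lemma interp_eq:
  assumes S: "finite S" "P_independent \<sigma> \<delta> S" and n: "card S = n"
    and G: "G \<in> skpolys_lt n" "Eval_on \<sigma> \<delta> S G = f"
  shows "interp \<sigma> \<delta> S n f = G"
  unfolding interp_def by (rule the_equality) (use G interp_unique[OF S] n in auto)

lemma rk_bound:
  assumes S: "finite S" "P_independent \<sigma> \<delta> S" and T: "finite T" and sub: "S \<subseteq> P_closure \<sigma> \<delta> T"
  shows "card S \<le> card T"
proof (rule ccontr)
  assume "\<not> card S \<le> card T"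
  obtain P where P: "P \<in> skpolys_lt (Suc (card T))" "P (card T) = 1" "\<forall>c\<in>T. Dapply \<sigma> \<delta> P c 1 = 0"
    using exist_monic[OF T] by blast
  have "\<forall>c\<in>S. Dapply \<sigma> \<delta> P c 1 = 0" using sub P(3) lt_polys[OF P(1)] by (auto simp: closure_iff)
  moreover have "P \<in> skpolys_lt (card S)" by (rule lt_mono[OF P(1)]) (use \<open>\<not> card S \<le> card T\<close> in simp)
  ultimately have "P = (\<lambda>_. 0)" using low_zero[OF S] by blast
  with P(2) show False by simp
qed

end



context skew begin

lemma kernel: fixes m :: nat and g :: "nat \<Rightarrow> 'a" shows "\<exists>Q\<in>skpolys. (\<forall>j<m. Dapply \<sigma> \<delta> Q a (g j) = 0) \<and>
   (\<forall>y. Dapply \<sigma> \<delta> Q a y = 0 \<longrightarrow> (\<exists>k. (\<forall>j<m. k j \<in> Kset \<sigma> \<delta> a) \<and> y = (\<Sum>j<m. g j * k j)))"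
proof (induction m)
  case 0
  show ?case
    by (rule bexI[of _ "skconst 1"]) (simp_all add: Dapply_const1 lt_polys[OF const_lt])
next
  case (Suc m)
  then obtain Q where Q: "Q \<in> skpolys" "\<forall>j<m. Dapply \<sigma> \<delta> Q a (g j) = 0"
    "\<forall>y. Dapply \<sigma> \<delta> Q a y = 0 \<longrightarrow> (\<exists>k. (\<forall>j<m. k j \<in> Kset \<sigma> \<delta> a) \<and> y = (\<Sum>j<m. g j * k j))" by blast
  obtain NQ where QN: "Q \<in> skpolys_lt NQ" using polys_lt[OF Q(1)] by blast
  define \<gamma> where "\<gamma> = Dapply \<sigma> \<delta> Q a (g m)"
  show ?case
  proof (cases "\<gamma> = 0")
    case True
    show ?thesis
    proof (rule bexI[OF _ Q(1)], intro conjI allI impI)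
      fix j assume "j < Suc m" then show "Dapply \<sigma> \<delta> Q a (g j) = 0"
        using Q(2) True \<gamma>_def less_Suc_eq by auto
    next
      fix y assume "Dapply \<sigma> \<delta> Q a y = 0"
      then obtain k where k: "\<forall>j<m. k j \<in> Kset \<sigma> \<delta> a" "y = (\<Sum>j<m. g j * k j)" using Q(3) by blast
      show "\<exists>k. (\<forall>j<Suc m. k j \<in> Kset \<sigma> \<delta> a) \<and> y = (\<Sum>j<Suc m. g j * k j)"
        by (rule exI[of _ "k(m := 0)"]) (use k in \<open>auto simp: less_Suc_eq\<close>)
    qed
  next
    case False
    define b' where "b' = D a \<gamma> * inverse \<gamma>"
    define Q' where "Q' = skmult \<sigma> \<delta> (skXminus b') Q"
    have Q'p: "Q' \<in> skpolys" unfolding Q'_def by (rule lt_polys[OF skmult_bound[OF Xm_lt QN]])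
    have ev: "Dapply \<sigma> \<delta> Q' a y = D a (Dapply \<sigma> \<delta> Q a y) - b' * Dapply \<sigma> \<delta> Q a y" for y
      unfolding Q'_def by (simp add: Dapply_skmult[OF Xm_lt QN] Dapply_Xm)
    show ?thesis
    proof (rule bexI[OF _ Q'p], intro conjI allI impI)
      fix j assume j: "j < Suc m"
      show "Dapply \<sigma> \<delta> Q' a (g j) = 0"
      proof (cases "j = m")
        case True
        then show ?thesis using False by (simp add: ev \<gamma>_def[symmetric] b'_def mult.assoc)
      next
        case False then show ?thesis using j Q(2) by (simp add: ev)
      qed
    next
      fix y assume y0: "Dapply \<sigma> \<delta> Q' a y = 0"
      define z where "z = Dapply \<sigma> \<delta> Q a y"
      have Dz: "D a z = b' * z" using y0 by (simp add: ev z_def)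
      define k0 where "k0 = inverse \<gamma> * z"
      have zk: "z = \<gamma> * k0" using False by (simp add: k0_def mult.assoc[symmetric])
      have "\<sigma> \<gamma> * D a k0 + \<delta> \<gamma> * k0 = D a (\<gamma> * k0)" by (simp add: D_mult)
      also have "\<dots> = b' * (\<gamma> * k0)" using Dz zk by simp
      also have "\<dots> = D a \<gamma> * (inverse \<gamma> * \<gamma>) * k0" by (simp add: b'_def mult.assoc)
      also have "\<dots> = D a \<gamma> * k0" using False by simp
      also have "\<dots> = \<sigma> \<gamma> * (a * k0) + \<delta> \<gamma> * k0" by (simp add: Dop_def algebra_simps)
      finally have "\<sigma> \<gamma> * D a k0 = \<sigma> \<gamma> * (a * k0)" by simp
      then have "D a k0 = a * k0" using s_nz[OF False] by simp
      then have k0K: "k0 \<in> Kset \<sigma> \<delta> a" by (simp add: K_iff)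
      have "Dapply \<sigma> \<delta> Q a (y - g m * k0) = 0"
        by (simp add: Dapply_pt_diff Dapply_pt_K[OF k0K] z_def[symmetric] \<gamma>_def[symmetric] zk)
      then obtain k where k: "\<forall>j<m. k j \<in> Kset \<sigma> \<delta> a" "y - g m * k0 = (\<Sum>j<m. g j * k j)"
        using Q(3) by blast
      show "\<exists>k. (\<forall>j<Suc m. k j \<in> Kset \<sigma> \<delta> a) \<and> y = (\<Sum>j<Suc m. g j * k j)"
      proof (rule exI[of _ "k(m := k0)"], intro conjI)
        show "\<forall>j<Suc m. (k(m := k0)) j \<in> Kset \<sigma> \<delta> a" using k(1) k0K by (auto simp: less_Suc_eq)
        have "(\<Sum>j<m. g j * (k(m := k0)) j) = (\<Sum>j<m. g j * k j)" by (rule sum.cong) auto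
        then show "y = (\<Sum>j<Suc m. g j * (k(m := k0)) j)" using k(2) by (simp add: algebra_simps)
      qed
    qed
  qed
qed

lemma close:
  fixes m :: nat
  assumes W: "finite W" "W \<subseteq> (\<Union>j<l. Cls \<sigma> \<delta> (a j))"
    and dist: "\<forall>i<l. \<forall>j<l. i \<noteq> j \<longrightarrow> Cls \<sigma> \<delta> (a i) \<noteq> Cls \<sigma> \<delta> (a j)" and i: "i < l"
    and en: "bij_betw (\<lambda>j. cj (a i) (\<alpha> j)) {..<m} (W \<inter> Cls \<sigma> \<delta> (a i))" "\<forall>j<m. \<alpha> j \<noteq> 0"
    and \<beta>: "\<beta> \<noteq> 0" "cj (a i) \<beta> \<in> P_closure \<sigma> \<delta> W"
  shows "\<exists>k. (\<forall>j<m. k j \<in> Kset \<sigma> \<delta> (a i)) \<and> \<beta> = (\<Sum>j<m. \<alpha> j * k j)"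
proof -
  have fin: "finite (W - Cls \<sigma> \<delta> (a i))" using W(1) by simp
  obtain P where P: "P \<in> skpolys_lt (Suc (card (W - Cls \<sigma> \<delta> (a i))))"
    "\<forall>c\<in>W - Cls \<sigma> \<delta> (a i). Dapply \<sigma> \<delta> P c 1 = 0"
    "\<forall>c. Dapply \<sigma> \<delta> P c 1 = 0 \<longrightarrow> (\<exists>s\<in>W - Cls \<sigma> \<delta> (a i). c \<in> Cls \<sigma> \<delta> s)"
    using exist_monic[OF fin] by blast
  have nz: "Dapply \<sigma> \<delta> P c 1 \<noteq> 0" if c: "c \<in> Cls \<sigma> \<delta> (a i)" for c
  proof
    assume "Dapply \<sigma> \<delta> P c 1 = 0"
    then obtain s where s: "s \<in> W" "s \<notin> Cls \<sigma> \<delta> (a i)" "c \<in> Cls \<sigma> \<delta> s" using P(3) by blast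
    obtain j where j: "j < l" "s \<in> Cls \<sigma> \<delta> (a j)" using W(2) s(1) by blast
    have "Cls \<sigma> \<delta> c = Cls \<sigma> \<delta> (a j)" using cls_trans[OF j(2) s(3)] by (rule cls_eq)
    moreover have "Cls \<sigma> \<delta> c = Cls \<sigma> \<delta> (a i)" using c by (rule cls_eq)
    ultimately have "Cls \<sigma> \<delta> (a i) = Cls \<sigma> \<delta> (a j)" by simp
    moreover have "i \<noteq> j" using s(2) j(2) by auto
    ultimately show False using dist i j(1) by simp
  qed
  have ker: "y = 0" if "Dapply \<sigma> \<delta> P (a i) y = 0" for y
  proof (rule ccontr)
    assume y: "y \<noteq> 0"
    have "Dapply \<sigma> \<delta> P (cj (a i) y) 1 = 0" using that by (simp add: Dapply_conj[OF y])
    with nz[OF cj_nz[OF y]] show False by simp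
  qed
  define g where "g j = Dapply \<sigma> \<delta> P (a i) (\<alpha> j)" for j
  obtain Q where Q: "Q \<in> skpolys" "\<forall>j<m. Dapply \<sigma> \<delta> Q (a i) (g j) = 0"
    "\<forall>y. Dapply \<sigma> \<delta> Q (a i) y = 0 \<longrightarrow> (\<exists>k. (\<forall>j<m. k j \<in> Kset \<sigma> \<delta> (a i)) \<and> y = (\<Sum>j<m. g j * k j))"
    using kernel[where m=m and g=g and a="a i"] by blast
  obtain NQ where QN: "Q \<in> skpolys_lt NQ" using polys_lt[OF Q(1)] by blast
  define R where "R = skmult \<sigma> \<delta> Q P"
  have Rp: "R \<in> skpolys" unfolding R_def by (rule lt_polys[OF skmult_bound[OF QN P(1)]])
  have evR: "Dapply \<sigma> \<delta> R c y = Dapply \<sigma> \<delta> Q c (Dapply \<sigma> \<delta> P c y)" for c y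
    unfolding R_def by (rule Dapply_skmult[OF QN P(1)])
  have vanX: "\<forall>c\<in>W. Dapply \<sigma> \<delta> R c 1 = 0"
  proof
    fix c assume c: "c \<in> W"
    show "Dapply \<sigma> \<delta> R c 1 = 0"
    proof (cases "c \<in> Cls \<sigma> \<delta> (a i)")
      case True
      then have "c \<in> (\<lambda>j. cj (a i) (\<alpha> j)) ` {..<m}" using en(1) c by (simp add: bij_betw_def)
      then obtain j where j: "j < m" "c = cj (a i) (\<alpha> j)" by auto
      have "Dapply \<sigma> \<delta> R c 1 = Dapply \<sigma> \<delta> R (a i) (\<alpha> j) * inverse (\<alpha> j)"
        using j en(2) by (simp add: Dapply_conj)
      also have "\<dots> = 0" using Q(2) j(1) by (simp add: evR g_def)
      finally show ?thesis .
    next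
      case False
      then show ?thesis using P(2) c by (simp add: evR)
    qed
  qed
  have "Dapply \<sigma> \<delta> R (cj (a i) \<beta>) 1 = 0" using \<beta>(2) Rp vanX unfolding closure_iff by blast
  then have "Dapply \<sigma> \<delta> R (a i) \<beta> * inverse \<beta> = 0" by (simp add: Dapply_conj[OF \<beta>(1)])
  then have "Dapply \<sigma> \<delta> R (a i) \<beta> = 0" using \<beta>(1) by simp
  then have "Dapply \<sigma> \<delta> Q (a i) (Dapply \<sigma> \<delta> P (a i) \<beta>) = 0" by (simp add: evR)
  then obtain k where k: "\<forall>j<m. k j \<in> Kset \<sigma> \<delta> (a i)" "Dapply \<sigma> \<delta> P (a i) \<beta> = (\<Sum>j<m. g j * k j)"
    using Q(3) by blast
  have "(\<Sum>j<m. g j * k j) = Dapply \<sigma> \<delta> P (a i) (\<Sum>j<m. \<alpha> j * k j)"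
    unfolding Dapply_pt_sum g_def by (rule sum.cong) (simp_all add: Dapply_pt_K k(1))
  then have "Dapply \<sigma> \<delta> P (a i) (\<beta> - (\<Sum>j<m. \<alpha> j * k j)) = 0" using k(2) by (simp add: Dapply_pt_diff)
  then have "\<beta> - (\<Sum>j<m. \<alpha> j * k j) = 0" by (rule ker)
  then have "\<beta> = (\<Sum>j<m. \<alpha> j * k j)" by simp
  then show ?thesis using k(1) by blast
qed

lemma spancl:
  fixes m :: nat
  assumes en: "bij_betw (\<lambda>j. cj c (\<alpha> j)) {..<m} Y" "\<forall>j<m. \<alpha> j \<noteq> 0"
    and k: "\<forall>j<m. k j \<in> Kset \<sigma> \<delta> c" and \<beta>: "\<beta> \<noteq> 0" "\<beta> = (\<Sum>j<m. \<alpha> j * k j)"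
  shows "cj c \<beta> \<in> P_closure \<sigma> \<delta> Y"
  unfolding closure_iff
proof (intro ballI impI)
  fix F assume F: "F \<in> skpolys" "\<forall>y\<in>Y. Dapply \<sigma> \<delta> F y 1 = 0"
  have "\<forall>j<m. Dapply \<sigma> \<delta> F c (\<alpha> j) = 0"
  proof (intro allI impI)
    fix j assume j: "j < m"
    have "cj c (\<alpha> j) \<in> Y" using en(1) j by (auto simp: bij_betw_def)
    moreover have "Dapply \<sigma> \<delta> F c (\<alpha> j) = Dapply \<sigma> \<delta> F (cj c (\<alpha> j)) 1 * \<alpha> j"
      by (rule Dapply_conj') (use en(2) j in simp)
    ultimately show "Dapply \<sigma> \<delta> F c (\<alpha> j) = 0" using F(2) by simp
  qed
  then have "Dapply \<sigma> \<delta> F c \<beta> = 0"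
    by (simp add: \<beta>(2) Dapply_pt_sum Dapply_pt_K k)
  then show "Dapply \<sigma> \<delta> F (cj c \<beta>) 1 = 0" by (simp add: Dapply_conj[OF \<beta>(1)])
qed

lemma indepK:
  fixes m :: nat
  assumes ind: "P_independent \<sigma> \<delta> W"
    and en: "bij_betw (\<lambda>j. cj c (\<alpha> j)) {..<m} Y" "\<forall>j<m. \<alpha> j \<noteq> 0" "Y \<subseteq> W"
    and k: "\<forall>j<m. k j \<in> Kset \<sigma> \<delta> c" and s: "(\<Sum>j<m. \<alpha> j * k j) = 0"
  shows "\<forall>j<m. k j = 0"
proof (intro allI impI, rule ccontr)
  fix j0 assume j0: "j0 < m" "k j0 \<noteq> 0"
  define c0 where "c0 = cj c (\<alpha> j0)"
  have c0X: "c0 \<in> W" using en(1,3) j0(1) by (auto simp: bij_betw_def c0_def)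
  have "c0 \<in> P_closure \<sigma> \<delta> (W - {c0})"
    unfolding closure_iff
  proof (intro ballI impI)
    fix F assume F: "F \<in> skpolys" "\<forall>y\<in>W - {c0}. Dapply \<sigma> \<delta> F y 1 = 0"
    have z: "Dapply \<sigma> \<delta> F c (\<alpha> j) * k j = 0" if j: "j \<in> {..<m} - {j0}" for j
    proof -
      have "cj c (\<alpha> j) \<noteq> c0" using en(1) j j0(1) unfolding c0_def bij_betw_def inj_on_def by blast
      moreover have "cj c (\<alpha> j) \<in> W" using en(1,3) j by (auto simp: bij_betw_def)
      moreover have "Dapply \<sigma> \<delta> F c (\<alpha> j) = Dapply \<sigma> \<delta> F (cj c (\<alpha> j)) 1 * \<alpha> j"
        by (rule Dapply_conj') (use en(2) j in simp)
      ultimately show ?thesis using F(2) by simp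
    qed
    have "0 = Dapply \<sigma> \<delta> F c (\<Sum>j<m. \<alpha> j * k j)" using s by simp
    also have "\<dots> = (\<Sum>j<m. Dapply \<sigma> \<delta> F c (\<alpha> j) * k j)" by (simp add: Dapply_pt_sum Dapply_pt_K k)
    also have "\<dots> = Dapply \<sigma> \<delta> F c (\<alpha> j0) * k j0"
      using sum.remove[of "{..<m}" j0 "\<lambda>j. Dapply \<sigma> \<delta> F c (\<alpha> j) * k j"] j0(1) z
      by (simp add: sum.neutral)
    finally have "Dapply \<sigma> \<delta> F c (\<alpha> j0) = 0" using j0(2) by simp
    then show "Dapply \<sigma> \<delta> F c0 1 = 0" using en(2) j0(1) by (simp add: c0_def Dapply_conj)
  qed
  with ind c0X show False by (simp add: P_independent_def)
qed

lemma enum_exists: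
  assumes Y: "finite Y" "Y \<subseteq> Cls \<sigma> \<delta> c"
  shows "\<exists>\<alpha>. bij_betw (\<lambda>j. cj c (\<alpha> j)) {..<card Y} Y \<and> (\<forall>j<card Y. \<alpha> j \<noteq> 0)"
proof -
  obtain h where h: "bij_betw h {..<card Y} Y" using ex_bij_betw_nat_finite[OF Y(1)] by (auto simp: atLeast0LessThan)
  define \<alpha> where "\<alpha> j = (SOME b. b \<noteq> 0 \<and> h j = cj c b)" for j
  have a: "\<alpha> j \<noteq> 0 \<and> h j = cj c (\<alpha> j)" if j: "j < card Y" for j
  proof -
    have "h j \<in> Y" using h j by (auto simp: bij_betw_def)
    then have "\<exists>b. b \<noteq> 0 \<and> h j = cj c b" using Y(2) by (auto simp: Cls_iff)
    then show ?thesis unfolding \<alpha>_def by (rule someI_ex)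
  qed
  have "bij_betw (\<lambda>j. cj c (\<alpha> j)) {..<card Y} Y"
    by (rule bij_betw_cong[THEN iffD1, OF _ h]) (simp add: a)
  then show ?thesis using a by blast
qed

lemma part_closure:
  assumes W: "finite W" "W \<subseteq> (\<Union>j<l. Cls \<sigma> \<delta> (a j))"
    and dist: "\<forall>i<l. \<forall>j<l. i \<noteq> j \<longrightarrow> Cls \<sigma> \<delta> (a i) \<noteq> Cls \<sigma> \<delta> (a j)" and i: "i < l"
    and b: "b \<in> Cls \<sigma> \<delta> (a i)" "b \<in> P_closure \<sigma> \<delta> W"
  shows "b \<in> P_closure \<sigma> \<delta> (W \<inter> Cls \<sigma> \<delta> (a i))"
proof -
  obtain \<alpha> where en: "bij_betw (\<lambda>j. cj (a i) (\<alpha> j)) {..<card (W \<inter> Cls \<sigma> \<delta> (a i))} (W \<inter> Cls \<sigma> \<delta> (a i))"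
    "\<forall>j<card (W \<inter> Cls \<sigma> \<delta> (a i)). \<alpha> j \<noteq> 0"
    using enum_exists[of "W \<inter> Cls \<sigma> \<delta> (a i)" "a i"] W(1) by auto
  obtain \<beta> where \<beta>: "\<beta> \<noteq> 0" "b = cj (a i) \<beta>" using b(1) by (auto simp: Cls_iff)
  obtain k where k: "\<forall>j<card (W \<inter> Cls \<sigma> \<delta> (a i)). k j \<in> Kset \<sigma> \<delta> (a i)"
    "\<beta> = (\<Sum>j<card (W \<inter> Cls \<sigma> \<delta> (a i)). \<alpha> j * k j)"
    using close[OF W dist i en \<beta>(1)] b(2) \<beta>(2) by blast
  show ?thesis using spancl[OF en k(1) \<beta>(1) k(2)] \<beta>(2) by simp
qed

end



context skew begin

lemma mat_inv:
  fixes m :: nat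
  assumes ind: "\<forall>k. (\<forall>j<m. k j \<in> Kset \<sigma> \<delta> c) \<longrightarrow> (\<Sum>j<m. \<alpha> j * k j) = 0 \<longrightarrow> (\<forall>j<m. k j = 0)"
    and M: "\<forall>j<m. \<forall>k<m. M j k \<in> Kset \<sigma> \<delta> c" and N: "\<forall>j<m. \<forall>k<m. N j k \<in> Kset \<sigma> \<delta> c"
    and bdef: "\<forall>k<m. \<beta> k = (\<Sum>j<m. \<alpha> j * M j k)" and adef: "\<forall>j<m. \<alpha> j = (\<Sum>k<m. \<beta> k * N k j)"
  shows "\<forall>j<m. \<forall>j'<m. (\<Sum>l<m. M j l * N l j') = (if j = j' then 1 else 0)"
proof (intro allI impI)
  fix j j' assume j: "j < m" and j': "j' < m"
  define e where "e j = (\<Sum>l<m. M j l * N l j') - (if j = j' then 1 else 0)" for j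
  have eK: "\<forall>j<m. e j \<in> Kset \<sigma> \<delta> c"
    using M N j' by (auto simp: e_def intro!: K_diff K_sum K_mult)
  have "(\<Sum>j<m. \<alpha> j * (\<Sum>l<m. M j l * N l j')) = (\<Sum>j<m. \<Sum>l<m. \<alpha> j * M j l * N l j')"
    by (simp add: sum_distrib_left mult.assoc)
  also have "\<dots> = (\<Sum>l<m. \<Sum>j<m. \<alpha> j * M j l * N l j')" by (rule sum.swap)
  also have "\<dots> = (\<Sum>l<m. (\<Sum>j<m. \<alpha> j * M j l) * N l j')"
    by (simp add: sum_distrib_right)
  also have "\<dots> = (\<Sum>l<m. \<beta> l * N l j')" using bdef by simp
  also have "\<dots> = \<alpha> j'" using adef j' by simp
  finally have s1: "(\<Sum>j<m. \<alpha> j * (\<Sum>l<m. M j l * N l j')) = \<alpha> j'" .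
  have s2: "(\<Sum>j<m. \<alpha> j * (if j = j' then 1 else 0)) = \<alpha> j'"
  proof -
    have "(\<Sum>j<m. \<alpha> j * (if j = j' then 1 else 0)) = (\<Sum>j<m. if j = j' then \<alpha> j else 0)"
      by (rule sum.cong) auto
    also have "\<dots> = \<alpha> j'" using j' by (simp add: sum.delta')
    finally show ?thesis .
  qed
  have "(\<Sum>j<m. \<alpha> j * e j) = 0"
    by (simp add: e_def right_diff_distrib sum_subtractf s1 s2 del: mult_1_right)
  then have "\<forall>j<m. e j = 0" using ind eK by blast
  then show "(\<Sum>l<m. M j l * N l j') = (if j = j' then 1 else 0)" using j by (simp add: e_def)
qed

lemma Eval_on_lin:
  assumes "F \<in> skpolys_lt n" "G \<in> skpolys_lt n"
  shows "Eval_on \<sigma> \<delta> S (\<lambda>k. u * F k + v * G k) = (\<lambda>x. u * Eval_on \<sigma> \<delta> S F x + v * Eval_on \<sigma> \<delta> S G x)"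
proof
  fix x
  have L: "(\<lambda>k. u * F k + v * G k) \<in> skpolys_lt n" using assms by (simp add: lt_iff)
  show "Eval_on \<sigma> \<delta> S (\<lambda>k. u * F k + v * G k) x = u * Eval_on \<sigma> \<delta> S F x + v * Eval_on \<sigma> \<delta> S G x"
    by (simp add: Eval_on_def skeval_eq[OF lt_polys[OF L]] skeval_eq[OF lt_polys[OF assms(1)]]
        skeval_eq[OF lt_polys[OF assms(2)]] Dapply_lin[OF assms])
qed

lemma Eval_fun: "Eval_on \<sigma> \<delta> S F \<in> funspace S" by (simp add: Eval_on_def funspace_def)

lemma interp_add:
  assumes S: "finite S" "P_independent \<sigma> \<delta> S" "card S = n" and f: "f \<in> funspace S" "g \<in> funspace S"
  shows "interp \<sigma> \<delta> S n (\<lambda>x. f x + g x) = (\<lambda>k. interp \<sigma> \<delta> S n f k + interp \<sigma> \<delta> S n g k)"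
proof -
  note F = interp_prop[OF S(1,2) f(1) S(3)] and G = interp_prop[OF S(1,2) f(2) S(3)]
  show ?thesis
  proof (rule interp_eq[OF S])
    show "(\<lambda>k. interp \<sigma> \<delta> S n f k + interp \<sigma> \<delta> S n g k) \<in> skpolys_lt n" using F G by (simp add: lt_iff)
    show "Eval_on \<sigma> \<delta> S (\<lambda>k. interp \<sigma> \<delta> S n f k + interp \<sigma> \<delta> S n g k) = (\<lambda>x. f x + g x)"
      using Eval_on_lin[OF conjunct1[OF F] conjunct1[OF G], of S 1 1] F G by simp
  qed
qed

lemma interp_scale:
  assumes S: "finite S" "P_independent \<sigma> \<delta> S" "card S = n" and f: "f \<in> funspace S"
  shows "interp \<sigma> \<delta> S n (\<lambda>x. c * f x) = (\<lambda>k. c * interp \<sigma> \<delta> S n f k)"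
proof -
  note F = interp_prop[OF S(1,2) f(1) S(3)]
  show ?thesis
  proof (rule interp_eq[OF S])
    show "(\<lambda>k. c * interp \<sigma> \<delta> S n f k) \<in> skpolys_lt n" using F by (simp add: lt_iff)
    show "Eval_on \<sigma> \<delta> S (\<lambda>k. c * interp \<sigma> \<delta> S n f k) = (\<lambda>x. c * f x)"
      using Eval_on_lin[OF conjunct1[OF F] conjunct1[OF F], of S c 0] F by simp
  qed
qed

lemma pi_iso:
  assumes A: "finite A" "P_independent \<sigma> \<delta> A" "card A = n"
    and B: "finite B" "P_independent \<sigma> \<delta> B" "card B = n"
  shows "left_iso (funspace A) (funspace B) (pi_AB \<sigma> \<delta> A B n)"
  unfolding left_iso_def
proof (intro conjI ballI allI)
  show "bij_betw (pi_AB \<sigma> \<delta> A B n) (funspace A) (funspace B)"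
    unfolding bij_betw_def
  proof
    show "inj_on (pi_AB \<sigma> \<delta> A B n) (funspace A)"
    proof (rule inj_onI)
      fix f g assume f: "f \<in> funspace A" and g: "g \<in> funspace A" and eq: "pi_AB \<sigma> \<delta> A B n f = pi_AB \<sigma> \<delta> A B n g"
      note F = interp_prop[OF A(1,2) f A(3)] and G = interp_prop[OF A(1,2) g A(3)]
      have "interp \<sigma> \<delta> A n f = interp \<sigma> \<delta> A n g"
        using interp_unique[OF B(1,2)] F G eq B(3) by (simp add: pi_AB_def)
      then show "f = g" using F G by metis
    qed
    show "pi_AB \<sigma> \<delta> A B n ` funspace A = funspace B"
    proof
      show "pi_AB \<sigma> \<delta> A B n ` funspace A \<subseteq> funspace B" by (auto simp: pi_AB_def Eval_fun)
      show "funspace B \<subseteq> pi_AB \<sigma> \<delta> A B n ` funspace A"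
      proof
        fix h :: "'a \<Rightarrow> 'a" assume h: "h \<in> funspace B"
        note H = interp_prop[OF B(1,2) h B(3)]
        define f where "f = Eval_on \<sigma> \<delta> A (interp \<sigma> \<delta> B n h)"
        have "interp \<sigma> \<delta> A n f = interp \<sigma> \<delta> B n h"
          by (rule interp_eq[OF A]) (use H f_def in auto)
        then have "pi_AB \<sigma> \<delta> A B n f = h" using H by (simp add: pi_AB_def)
        moreover have "f \<in> funspace A" by (simp add: f_def Eval_fun)
        ultimately show "h \<in> pi_AB \<sigma> \<delta> A B n ` funspace A" by blast
      qed
    qed
  qed
next
  fix f g :: "'a \<Rightarrow> 'a" assume f: "f \<in> funspace A" and g: "g \<in> funspace A"
  note F = interp_prop[OF A(1,2) f A(3)] and G = interp_prop[OF A(1,2) g A(3)]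
  show "pi_AB \<sigma> \<delta> A B n (\<lambda>x. f x + g x) = (\<lambda>y. pi_AB \<sigma> \<delta> A B n f y + pi_AB \<sigma> \<delta> A B n g y)"
    using Eval_on_lin[OF conjunct1[OF F] conjunct1[OF G], of B 1 1]
    by (simp add: pi_AB_def interp_add[OF A f g])
next
  fix c :: 'a and f :: "'a \<Rightarrow> 'a" assume f: "f \<in> funspace A"
  note F = interp_prop[OF A(1,2) f A(3)]
  show "pi_AB \<sigma> \<delta> A B n (\<lambda>x. c * f x) = (\<lambda>y. c * pi_AB \<sigma> \<delta> A B n f y)"
    using Eval_on_lin[OF conjunct1[OF F] conjunct1[OF F], of B c 0]
    by (simp add: pi_AB_def interp_scale[OF A f])
qed

end



context skew begin

lemma phi_formula:
  assumes S: "finite S" "P_independent \<sigma> \<delta> S" "card S = n"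
    and en: "\<forall>i<l. bij_betw (\<lambda>j. cj (a i) (\<alpha> i j)) {..<card (S \<inter> Cls \<sigma> \<delta> (a i))} (S \<inter> Cls \<sigma> \<delta> (a i))
               \<and> (\<forall>j<card (S \<inter> Cls \<sigma> \<delta> (a i)). \<alpha> i j \<noteq> 0)"
    and f: "f \<in> funspace S"
  shows "phi \<sigma> \<delta> l a S \<alpha> n f = (\<lambda>(i,j). if i < l \<and> j < card (S \<inter> Cls \<sigma> \<delta> (a i))
            then f (cj (a i) (\<alpha> i j)) * \<alpha> i j else 0)"
proof (rule ext, clarify)
  fix i j
  note F = interp_prop[OF S(1,2) f S(3)]
  show "phi \<sigma> \<delta> l a S \<alpha> n f (i, j) = (if i < l \<and> j < card (S \<inter> Cls \<sigma> \<delta> (a i))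
            then f (cj (a i) (\<alpha> i j)) * \<alpha> i j else 0)"
  proof (cases "i < l \<and> j < card (S \<inter> Cls \<sigma> \<delta> (a i))")
    case True
    have nz: "\<alpha> i j \<noteq> 0" and xS: "cj (a i) (\<alpha> i j) \<in> S" using en True by (auto simp: bij_betw_def)
    have "Dapply \<sigma> \<delta> (interp \<sigma> \<delta> S n f) (a i) (\<alpha> i j)
        = Dapply \<sigma> \<delta> (interp \<sigma> \<delta> S n f) (cj (a i) (\<alpha> i j)) 1 * \<alpha> i j" by (rule Dapply_conj'[OF nz])
    also have "Dapply \<sigma> \<delta> (interp \<sigma> \<delta> S n f) (cj (a i) (\<alpha> i j)) 1
        = Eval_on \<sigma> \<delta> S (interp \<sigma> \<delta> S n f) (cj (a i) (\<alpha> i j))"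
      using xS by (simp add: Eval_on_def skeval_eq[OF lt_polys[OF conjunct1[OF F]]])
    also have "\<dots> = f (cj (a i) (\<alpha> i j))" using F by simp
    finally show ?thesis using True by (simp add: phi_def)
  next
    case False then show ?thesis unfolding phi_def by auto
  qed
qed

lemma phi_iso:
  assumes S: "finite S" "P_independent \<sigma> \<delta> S" "card S = n"
    and en: "\<forall>i<l. bij_betw (\<lambda>j. cj (a i) (\<alpha> i j)) {..<card (S \<inter> Cls \<sigma> \<delta> (a i))} (S \<inter> Cls \<sigma> \<delta> (a i))
               \<and> (\<forall>j<card (S \<inter> Cls \<sigma> \<delta> (a i)). \<alpha> i j \<noteq> 0)"
    and cover: "S \<subseteq> (\<Union>j<l. Cls \<sigma> \<delta> (a j))"
    and dist: "\<forall>i<l. \<forall>j<l. i \<noteq> j \<longrightarrow> Cls \<sigma> \<delta> (a i) \<noteq> Cls \<sigma> \<delta> (a j)"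
  shows "left_iso (funspace S) (blockvecs l (\<lambda>i. card (S \<inter> Cls \<sigma> \<delta> (a i)))) (phi \<sigma> \<delta> l a S \<alpha> n)"
proof -
  define C where "C i = card (S \<inter> Cls \<sigma> \<delta> (a i))" for i
  have en': "\<forall>i<l. bij_betw (\<lambda>j. cj (a i) (\<alpha> i j)) {..<C i} (S \<inter> Cls \<sigma> \<delta> (a i)) \<and> (\<forall>j<C i. \<alpha> i j \<noteq> 0)"
    using en by (simp add: C_def)
  have form: "phi \<sigma> \<delta> l a S \<alpha> n f = (\<lambda>(i,j). if i < l \<and> j < C i then f (cj (a i) (\<alpha> i j)) * \<alpha> i j else 0)"
    if "f \<in> funspace S" for f
    using phi_formula[OF S en that] by (simp add: C_def)
  have inS: "cj (a i) (\<alpha> i j) \<in> S \<inter> Cls \<sigma> \<delta> (a i)" if "i < l" "j < C i" for i j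
    using en' that by (auto simp: bij_betw_def)
  have uniq: "i = i' \<and> j = j'" if "i < l" "j < C i" "i' < l" "j' < C i'"
    "cj (a i) (\<alpha> i j) = cj (a i') (\<alpha> i' j')" for i j i' j'
  proof -
    have x1: "cj (a i) (\<alpha> i j) \<in> Cls \<sigma> \<delta> (a i)" using inS[OF that(1,2)] by simp
    have x2: "cj (a i) (\<alpha> i j) \<in> Cls \<sigma> \<delta> (a i')" using inS[OF that(3,4)] that(5) by simp
    have "Cls \<sigma> \<delta> (a i) = Cls \<sigma> \<delta> (a i')" using cls_eq[OF x1] cls_eq[OF x2] by simp
    then have ii: "i = i'" using dist that(1,3) by blast
    then have "\<alpha> i j = \<alpha> i j' \<or> cj (a i) (\<alpha> i j) = cj (a i) (\<alpha> i j')" using that(5) by simp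
    then have "j = j'" using en' that(1,2,4) ii unfolding bij_betw_def inj_on_def by auto
    then show ?thesis using ii by simp
  qed
  have cov: "\<exists>i j. i < l \<and> j < C i \<and> x = cj (a i) (\<alpha> i j)" if "x \<in> S" for x
  proof -
    have "x \<in> (\<Union>j<l. Cls \<sigma> \<delta> (a j))" using cover that by blast
    then obtain i where i: "i < l" "x \<in> Cls \<sigma> \<delta> (a i)" by auto
    then have "x \<in> (\<lambda>j. cj (a i) (\<alpha> i j)) ` {..<C i}" using en' that by (auto simp: bij_betw_def)
    then show ?thesis using i by auto
  qed
  have funadd: "(\<lambda>x. f x + g x) \<in> funspace S" if "f \<in> funspace S" "g \<in> funspace S" for f g :: "'a \<Rightarrow> 'a"
    using that by (simp add: funspace_def)
  have funsc: "(\<lambda>x. c * f x) \<in> funspace S" if "f \<in> funspace S" for f :: "'a \<Rightarrow> 'a" and c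
    using that by (simp add: funspace_def)
  have bij: "bij_betw (phi \<sigma> \<delta> l a S \<alpha> n) (funspace S) (blockvecs l C)"
    unfolding bij_betw_def
  proof (intro conjI)
    show "inj_on (phi \<sigma> \<delta> l a S \<alpha> n) (funspace S)"
    proof (rule inj_onI)
      fix f g :: "'a \<Rightarrow> 'a" assume f: "f \<in> funspace S" and g: "g \<in> funspace S"
        and eq: "phi \<sigma> \<delta> l a S \<alpha> n f = phi \<sigma> \<delta> l a S \<alpha> n g"
      show "f = g"
      proof
        fix x show "f x = g x"
        proof (cases "x \<in> S")
          case False then show ?thesis using f g by (simp add: funspace_def)
        next
          case True
          then obtain i j where ij: "i < l" "j < C i" "x = cj (a i) (\<alpha> i j)" using cov by blast
          have "f x * \<alpha> i j = g x * \<alpha> i j"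
            using fun_cong[OF eq, of "(i,j)"] ij by (simp add: form[OF f] form[OF g])
          moreover have "\<alpha> i j \<noteq> 0" using en' ij by simp
          ultimately show ?thesis by simp
        qed
      qed
    qed
    show "phi \<sigma> \<delta> l a S \<alpha> n ` funspace S = blockvecs l C"
    proof
      show "phi \<sigma> \<delta> l a S \<alpha> n ` funspace S \<subseteq> blockvecs l C"
        by (auto simp: blockvecs_def phi_def C_def)
      show "blockvecs l C \<subseteq> phi \<sigma> \<delta> l a S \<alpha> n ` funspace S"
      proof
        fix c :: "nat \<times> nat \<Rightarrow> 'a" assume c: "c \<in> blockvecs l C"
        define idx where "idx x = (SOME p. fst p < l \<and> snd p < C (fst p) \<and> x = cj (a (fst p)) (\<alpha> (fst p) (snd p)))" for x
        define f where "f x = (if x \<in> S then c (idx x) * inverse (\<alpha> (fst (idx x)) (snd (idx x))) else 0)" for x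
        have fS: "f \<in> funspace S" by (simp add: f_def funspace_def)
        have "phi \<sigma> \<delta> l a S \<alpha> n f = c"
        proof (rule ext, clarify)
          fix i j
          show "phi \<sigma> \<delta> l a S \<alpha> n f (i, j) = c (i, j)"
          proof (cases "i < l \<and> j < C i")
            case True
            define x where "x = cj (a i) (\<alpha> i j)"
            have xS: "x \<in> S" using inS True by (simp add: x_def)
            have ex: "\<exists>p. fst p < l \<and> snd p < C (fst p) \<and> x = cj (a (fst p)) (\<alpha> (fst p) (snd p))"
              using True by (intro exI[of _ "(i,j)"]) (simp add: x_def)
            have p: "fst (idx x) < l \<and> snd (idx x) < C (fst (idx x)) \<and> x = cj (a (fst (idx x))) (\<alpha> (fst (idx x)) (snd (idx x)))"
              unfolding idx_def by (rule someI_ex[OF ex])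
            have "fst (idx x) = i \<and> snd (idx x) = j"
              using uniq[of "fst (idx x)" "snd (idx x)" i j] p True by (simp add: x_def)
            then have idxx: "idx x = (i, j)" by (simp add: prod_eq_iff)
            have nz: "\<alpha> i j \<noteq> 0" using en' True by simp
            have "phi \<sigma> \<delta> l a S \<alpha> n f (i, j) = f x * \<alpha> i j" using True by (simp add: form[OF fS] x_def)
            also have "\<dots> = c (i, j)" using xS nz by (simp add: f_def idxx mult.assoc)
            finally show ?thesis .
          next
            case False
            then show ?thesis using c unfolding form[OF fS] blockvecs_def by auto
          qed
        qed
        then show "c \<in> phi \<sigma> \<delta> l a S \<alpha> n ` funspace S" using fS by blast
      qed
    qed
  qed
  have "left_iso (funspace S) (blockvecs l C) (phi \<sigma> \<delta> l a S \<alpha> n)"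
    unfolding left_iso_def
  proof (intro conjI ballI allI)
    show "bij_betw (phi \<sigma> \<delta> l a S \<alpha> n) (funspace S) (blockvecs l C)" by (rule bij)
  next
    fix f g :: "'a \<Rightarrow> 'a" assume f: "f \<in> funspace S" and g: "g \<in> funspace S"
    show "phi \<sigma> \<delta> l a S \<alpha> n (\<lambda>x. f x + g x) = (\<lambda>y. phi \<sigma> \<delta> l a S \<alpha> n f y + phi \<sigma> \<delta> l a S \<alpha> n g y)"
      by (rule ext, clarify) (simp add: form[OF f] form[OF g] form[OF funadd[OF f g]] distrib_right)
  next
    fix c :: 'a and f :: "'a \<Rightarrow> 'a" assume f: "f \<in> funspace S"
    show "phi \<sigma> \<delta> l a S \<alpha> n (\<lambda>x. c * f x) = (\<lambda>y. c * phi \<sigma> \<delta> l a S \<alpha> n f y)"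
      by (rule ext, clarify) (simp add: form[OF f] form[OF funsc[OF f]] mult.assoc)
  qed
  moreover have "C = (\<lambda>i. card (S \<inter> Cls \<sigma> \<delta> (a i)))" by (rule ext) (simp add: C_def)
  ultimately show ?thesis by simp
qed

lemma piM_iso:
  fixes M N :: "nat \<Rightarrow> nat \<Rightarrow> nat \<Rightarrow> 'a"
  assumes MN: "\<forall>i<l. \<forall>j<nn i. \<forall>k<nn i. (\<Sum>t<nn i. M i j t * N i t k) = (if j = k then 1 else 0)"
    and NM: "\<forall>i<l. \<forall>j<nn i. \<forall>k<nn i. (\<Sum>t<nn i. N i j t * M i t k) = (if j = k then 1 else 0)"
  shows "left_iso (blockvecs l nn) (blockvecs l nn) (piM l nn M)"
proof -
  have into: "piM l nn X c \<in> blockvecs l nn" for X c by (auto simp: blockvecs_def piM_def)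
  have inv: "piM l nn Y (piM l nn X c) = c" if c: "c \<in> blockvecs l nn"
    and XY: "\<forall>i<l. \<forall>j<nn i. \<forall>k<nn i. (\<Sum>t<nn i. X i j t * Y i t k) = (if j = k then 1 else 0)" for X Y c
  proof (rule ext, clarify)
    fix i k
    show "piM l nn Y (piM l nn X c) (i, k) = c (i, k)"
    proof (cases "i < l \<and> k < nn i")
      case True
      have "piM l nn Y (piM l nn X c) (i, k) = (\<Sum>j<nn i. (\<Sum>j'<nn i. c (i, j') * X i j' j) * Y i j k)"
        using True by (simp add: piM_def)
      also have "\<dots> = (\<Sum>j<nn i. \<Sum>j'<nn i. c (i, j') * X i j' j * Y i j k)" by (simp add: sum_distrib_right)
      also have "\<dots> = (\<Sum>j'<nn i. \<Sum>j<nn i. c (i, j') * X i j' j * Y i j k)" by (rule sum.swap)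
      also have "\<dots> = (\<Sum>j'<nn i. c (i, j') * (\<Sum>j<nn i. X i j' j * Y i j k))"
        by (simp add: sum_distrib_left mult.assoc)
      also have "\<dots> = (\<Sum>j'<nn i. if j' = k then c (i, j') else 0)"
        by (rule sum.cong) (use XY True in auto)
      also have "\<dots> = c (i, k)" using True by (simp add: sum.delta')
      finally show ?thesis .
    next
      case False then show ?thesis using c unfolding piM_def blockvecs_def by auto
    qed
  qed
  show ?thesis unfolding left_iso_def
  proof (intro conjI ballI allI)
    show "bij_betw (piM l nn M) (blockvecs l nn) (blockvecs l nn)"
      unfolding bij_betw_def
    proof
      show "inj_on (piM l nn M) (blockvecs l nn)"
        by (rule inj_on_inverseI[where g="piM l nn N"]) (rule inv[OF _ MN])
      show "piM l nn M ` blockvecs l nn = blockvecs l nn"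
      proof
        show "piM l nn M ` blockvecs l nn \<subseteq> blockvecs l nn" using into by blast
        show "blockvecs l nn \<subseteq> piM l nn M ` blockvecs l nn"
        proof
          fix c :: "nat \<times> nat \<Rightarrow> 'a" assume "c \<in> blockvecs l nn"
          then have "c = piM l nn M (piM l nn N c)" by (rule inv[OF _ NM, symmetric])
          then show "c \<in> piM l nn M ` blockvecs l nn" using into by blast
        qed
      qed
    qed
  next
    fix f g :: "nat \<times> nat \<Rightarrow> 'a" assume "f \<in> blockvecs l nn" "g \<in> blockvecs l nn"
    show "piM l nn M (\<lambda>x. f x + g x) = (\<lambda>y. piM l nn M f y + piM l nn M g y)"
      by (rule ext, clarify) (simp add: piM_def distrib_right sum.distrib)
  next
    fix c :: 'a and f :: "nat \<times> nat \<Rightarrow> 'a" assume "f \<in> blockvecs l nn"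
    show "piM l nn M (\<lambda>x. c * f x) = (\<lambda>y. c * piM l nn M f y)"
      by (rule ext, clarify) (simp add: piM_def sum_distrib_left mult.assoc)
  qed
qed

end



theorem mainTheorem9:
  fixes \<sigma> \<delta> :: "'a::division_ring \<Rightarrow> 'a" and \<Omega> A B :: "'a set"
    and l :: nat and a :: "nat \<Rightarrow> 'a"
  assumes "ring_endo \<sigma>" and "sigma_derivation \<sigma> \<delta>"
    and "P_closed \<sigma> \<delta> \<Omega>" and "P_basis \<sigma> \<delta> \<Omega> A" and "P_basis \<sigma> \<delta> \<Omega> B" and "finite A"
    and "\<forall>i<l. \<forall>j<l. i \<noteq> j \<longrightarrow> Cls \<sigma> \<delta> (a i) \<noteq> Cls \<sigma> \<delta> (a j)"
    and "\<forall>i<l. A \<inter> Cls \<sigma> \<delta> (a i) \<noteq> {}" and "\<forall>i<l. B \<inter> Cls \<sigma> \<delta> (a i) \<noteq> {}"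
    and "A = (\<Union>i<l. A \<inter> Cls \<sigma> \<delta> (a i))" and "B = (\<Union>i<l. B \<inter> Cls \<sigma> \<delta> (a i))"
  shows "let n = Rk \<sigma> \<delta> \<Omega>; nn = (\<lambda>i. card (A \<inter> Cls \<sigma> \<delta> (a i))) in
    (\<forall>i<l. card (A \<inter> Cls \<sigma> \<delta> (a i)) = card (B \<inter> Cls \<sigma> \<delta> (a i))) \<and>
    n = (\<Sum>i<l. nn i) \<and>
    (\<forall>\<alpha> \<beta>.
      (\<forall>i<l. bij_betw (\<lambda>j. Dop \<sigma> \<delta> (a i) (\<alpha> i j) * inverse (\<alpha> i j))
                 {..<card (A \<inter> Cls \<sigma> \<delta> (a i))} (A \<inter> Cls \<sigma> \<delta> (a i)) \<and>
             (\<forall>j<card (A \<inter> Cls \<sigma> \<delta> (a i)). \<alpha> i j \<noteq> 0)) \<and>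
      (\<forall>i<l. bij_betw (\<lambda>j. Dop \<sigma> \<delta> (a i) (\<beta> i j) * inverse (\<beta> i j))
                 {..<card (B \<inter> Cls \<sigma> \<delta> (a i))} (B \<inter> Cls \<sigma> \<delta> (a i)) \<and>
             (\<forall>j<card (B \<inter> Cls \<sigma> \<delta> (a i)). \<beta> i j \<noteq> 0))
      \<longrightarrow> (\<exists>M. (\<forall>i<l. inv_matrix_in (Kset \<sigma> \<delta> (a i)) (nn i) (M i) \<and>
                     (\<forall>k<nn i. \<beta> i k = (\<Sum>j<nn i. \<alpha> i j * M i j k))) \<and>
              left_iso (funspace A) (blockvecs l nn) (phi \<sigma> \<delta> l a A \<alpha> n) \<and>
              left_iso (funspace B) (blockvecs l nn) (phi \<sigma> \<delta> l a B \<beta> n) \<and>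
              left_iso (funspace A) (funspace B) (pi_AB \<sigma> \<delta> A B n) \<and>
              left_iso (blockvecs l nn) (blockvecs l nn) (piM l nn M) \<and>
              (\<forall>f\<in>funspace A. phi \<sigma> \<delta> l a B \<beta> n (pi_AB \<sigma> \<delta> A B n f) =
                               piM l nn M (phi \<sigma> \<delta> l a A \<alpha> n f))))"
proof -
  interpret skew \<sigma> \<delta> using assms(1,2) by (rule skew.intro)
  note dist = assms(7)
  have Asub: "A \<subseteq> \<Omega>" and indA: "P_independent \<sigma> \<delta> A" and clA: "P_closure \<sigma> \<delta> A = \<Omega>"
    using assms(4) by (auto simp: P_basis_def)
  have Bsub: "B \<subseteq> \<Omega>" and indB: "P_independent \<sigma> \<delta> B" and clB: "P_closure \<sigma> \<delta> B = \<Omega>"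
    using assms(5) by (auto simp: P_basis_def)
  have Acov: "A \<subseteq> (\<Union>j<l. Cls \<sigma> \<delta> (a j))"
  proof
    fix x assume "x \<in> A"
    then have "x \<in> (\<Union>i<l. A \<inter> Cls \<sigma> \<delta> (a i))" using assms(10) by blast
    then show "x \<in> (\<Union>j<l. Cls \<sigma> \<delta> (a j))" by blast
  qed
  have Bcov: "B \<subseteq> (\<Union>j<l. Cls \<sigma> \<delta> (a j))"
  proof
    fix x assume "x \<in> B"
    then have "x \<in> (\<Union>i<l. B \<inter> Cls \<sigma> \<delta> (a i))" using assms(11) by blast
    then show "x \<in> (\<Union>j<l. Cls \<sigma> \<delta> (a j))" by blast
  qed
  have bc: "finite B' \<and> card B' = card A" if hB': "P_basis \<sigma> \<delta> \<Omega> B'" for B'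
  proof -
    have sub': "B' \<subseteq> P_closure \<sigma> \<delta> A" and ind': "P_independent \<sigma> \<delta> B'" and cl': "P_closure \<sigma> \<delta> B' = \<Omega>"
      using hB' clA by (auto simp: P_basis_def)
    have fin': "finite B'"
    proof (rule ccontr)
      assume "infinite B'"
      then obtain B'' where B'': "finite B''" "card B'' = Suc (card A)" "B'' \<subseteq> B'"
        using infinite_arbitrarily_large by blast
      have "card B'' \<le> card A"
        using rk_bound[OF B''(1) indep_subset[OF ind' B''(3)] assms(6)] B''(3) sub' by blast
      then show False using B''(2) by simp
    qed
    have "card B' \<le> card A" by (rule rk_bound[OF fin' ind' assms(6) sub'])
    moreover have "card A \<le> card B'" by (rule rk_bound[OF assms(6) indA fin']) (use Asub cl' in simp)
    ultimately show ?thesis using fin' by simp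
  qed
  have finB: "finite B" and cardB: "card B = card A" using bc[OF assms(5)] by auto
  have Rk: "Rk \<sigma> \<delta> \<Omega> = card A"
  proof -
    have "P_basis \<sigma> \<delta> \<Omega> (SOME B'. P_basis \<sigma> \<delta> \<Omega> B')" by (rule someI[of _ A]) (rule assms(4))
    then show ?thesis unfolding Rk_def using bc by blast
  qed
  have RkA: "card A = Rk \<sigma> \<delta> \<Omega>" and RkB: "card B = Rk \<sigma> \<delta> \<Omega>" using Rk cardB by auto
  have cardi: "\<forall>i<l. card (A \<inter> Cls \<sigma> \<delta> (a i)) = card (B \<inter> Cls \<sigma> \<delta> (a i))"
  proof (intro allI impI)
    fix i assume i: "i < l"
    have s1: "B \<inter> Cls \<sigma> \<delta> (a i) \<subseteq> P_closure \<sigma> \<delta> (A \<inter> Cls \<sigma> \<delta> (a i))"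
    proof
      fix b assume "b \<in> B \<inter> Cls \<sigma> \<delta> (a i)"
      then show "b \<in> P_closure \<sigma> \<delta> (A \<inter> Cls \<sigma> \<delta> (a i))"
        using part_closure[OF assms(6) Acov dist i, of b] Bsub clA by blast
    qed
    have s2: "A \<inter> Cls \<sigma> \<delta> (a i) \<subseteq> P_closure \<sigma> \<delta> (B \<inter> Cls \<sigma> \<delta> (a i))"
    proof
      fix b assume "b \<in> A \<inter> Cls \<sigma> \<delta> (a i)"
      then show "b \<in> P_closure \<sigma> \<delta> (B \<inter> Cls \<sigma> \<delta> (a i))"
        using part_closure[OF finB Bcov dist i, of b] Asub clB by blast
    qed
    have "card (B \<inter> Cls \<sigma> \<delta> (a i)) \<le> card (A \<inter> Cls \<sigma> \<delta> (a i))"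
      by (rule rk_bound[OF _ indep_subset[OF indB] _ s1]) (use finB assms(6) in auto)
    moreover have "card (A \<inter> Cls \<sigma> \<delta> (a i)) \<le> card (B \<inter> Cls \<sigma> \<delta> (a i))"
      by (rule rk_bound[OF _ indep_subset[OF indA] _ s2]) (use finB assms(6) in auto)
    ultimately show "card (A \<inter> Cls \<sigma> \<delta> (a i)) = card (B \<inter> Cls \<sigma> \<delta> (a i))" by simp
  qed
  have disj: "False" if "i < l" "j < l" "i \<noteq> j" "x \<in> Cls \<sigma> \<delta> (a i)" "x \<in> Cls \<sigma> \<delta> (a j)" for i j x
  proof -
    have "Cls \<sigma> \<delta> (a i) = Cls \<sigma> \<delta> (a j)" using cls_eq[OF that(4)] cls_eq[OF that(5)] by simp
    then show False using dist that(1-3) by blast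
  qed
  have sumn: "card A = (\<Sum>i<l. card (A \<inter> Cls \<sigma> \<delta> (a i)))"
  proof -
    have "card A = card (\<Union>i<l. A \<inter> Cls \<sigma> \<delta> (a i))" by (rule arg_cong[where f=card, OF assms(10)])
    also have "\<dots> = (\<Sum>i<l. card (A \<inter> Cls \<sigma> \<delta> (a i)))"
      by (rule card_UN_disjoint) (use assms(6) disj in auto)
    finally show ?thesis .
  qed
  show ?thesis unfolding Let_def
    apply (intro conjI allI impI)
    subgoal using cardi by blast
    subgoal using Rk sumn by simp
    subgoal premises H for \<alpha> \<beta>
    proof -
      have enA: "\<forall>i<l. bij_betw (\<lambda>j. cj (a i) (\<alpha> i j)) {..<card (A \<inter> Cls \<sigma> \<delta> (a i))} (A \<inter> Cls \<sigma> \<delta> (a i))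
               \<and> (\<forall>j<card (A \<inter> Cls \<sigma> \<delta> (a i)). \<alpha> i j \<noteq> 0)"
        using H by (simp add: cj_def)
      have enB: "\<forall>i<l. bij_betw (\<lambda>j. cj (a i) (\<beta> i j)) {..<card (B \<inter> Cls \<sigma> \<delta> (a i))} (B \<inter> Cls \<sigma> \<delta> (a i))
               \<and> (\<forall>j<card (B \<inter> Cls \<sigma> \<delta> (a i)). \<beta> i j \<noteq> 0)"
        using H by (simp add: cj_def)
      have enB': "\<forall>i<l. bij_betw (\<lambda>j. cj (a i) (\<beta> i j)) {..<card (A \<inter> Cls \<sigma> \<delta> (a i))} (B \<inter> Cls \<sigma> \<delta> (a i))
               \<and> (\<forall>j<card (A \<inter> Cls \<sigma> \<delta> (a i)). \<beta> i j \<noteq> 0)"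
        using enB cardi by simp
      have enA': "\<forall>i<l. bij_betw (\<lambda>j. cj (a i) (\<alpha> i j)) {..<card (B \<inter> Cls \<sigma> \<delta> (a i))} (A \<inter> Cls \<sigma> \<delta> (a i))
               \<and> (\<forall>j<card (B \<inter> Cls \<sigma> \<delta> (a i)). \<alpha> i j \<noteq> 0)"
        using enA cardi by simp
      have Mex: "\<exists>c. (\<forall>j<card (A \<inter> Cls \<sigma> \<delta> (a i)). c j \<in> Kset \<sigma> \<delta> (a i)) \<and>
                  \<beta> i k = (\<Sum>j<card (A \<inter> Cls \<sigma> \<delta> (a i)). \<alpha> i j * c j)"
        if i: "i < l" and k: "k < card (A \<inter> Cls \<sigma> \<delta> (a i))" for i k
      proof -
        have nz: "\<beta> i k \<noteq> 0" using enB' i k by blast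
        have "cj (a i) (\<beta> i k) \<in> B" using enB' i k by (auto simp: bij_betw_def)
        then have cl: "cj (a i) (\<beta> i k) \<in> P_closure \<sigma> \<delta> A" using Bsub clA by blast
        show ?thesis using close[OF assms(6) Acov dist i, of "\<alpha> i" _ "\<beta> i k"] enA i nz cl by blast
      qed
      have Nex: "\<exists>c. (\<forall>j<card (A \<inter> Cls \<sigma> \<delta> (a i)). c j \<in> Kset \<sigma> \<delta> (a i)) \<and>
                  \<alpha> i k = (\<Sum>j<card (A \<inter> Cls \<sigma> \<delta> (a i)). \<beta> i j * c j)"
        if i: "i < l" and k: "k < card (A \<inter> Cls \<sigma> \<delta> (a i))" for i k
      proof -
        have nz: "\<alpha> i k \<noteq> 0" using enA i k by blast
        have "cj (a i) (\<alpha> i k) \<in> A" using enA i k by (auto simp: bij_betw_def)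
        then have cl: "cj (a i) (\<alpha> i k) \<in> P_closure \<sigma> \<delta> B" using Asub clB by blast
        have "\<exists>c. (\<forall>j<card (B \<inter> Cls \<sigma> \<delta> (a i)). c j \<in> Kset \<sigma> \<delta> (a i)) \<and>
                  \<alpha> i k = (\<Sum>j<card (B \<inter> Cls \<sigma> \<delta> (a i)). \<beta> i j * c j)"
          using close[OF finB Bcov dist i, of "\<beta> i" _ "\<alpha> i k"] enB i nz cl by blast
        then show ?thesis using cardi i by simp
      qed
      define M where "M i j k = (SOME c. (\<forall>j<card (A \<inter> Cls \<sigma> \<delta> (a i)). c j \<in> Kset \<sigma> \<delta> (a i)) \<and>
                  \<beta> i k = (\<Sum>j<card (A \<inter> Cls \<sigma> \<delta> (a i)). \<alpha> i j * c j)) j" for i j k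
      define N where "N i j k = (SOME c. (\<forall>j<card (A \<inter> Cls \<sigma> \<delta> (a i)). c j \<in> Kset \<sigma> \<delta> (a i)) \<and>
                  \<alpha> i k = (\<Sum>j<card (A \<inter> Cls \<sigma> \<delta> (a i)). \<beta> i j * c j)) j" for i j k
      have Mp: "(\<forall>j<card (A \<inter> Cls \<sigma> \<delta> (a i)). M i j k \<in> Kset \<sigma> \<delta> (a i)) \<and>
                  \<beta> i k = (\<Sum>j<card (A \<inter> Cls \<sigma> \<delta> (a i)). \<alpha> i j * M i j k)"
        if "i < l" "k < card (A \<inter> Cls \<sigma> \<delta> (a i))" for i k
        unfolding M_def by (rule someI_ex[OF Mex[OF that]])
      have Np: "(\<forall>j<card (A \<inter> Cls \<sigma> \<delta> (a i)). N i j k \<in> Kset \<sigma> \<delta> (a i)) \<and>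
                  \<alpha> i k = (\<Sum>j<card (A \<inter> Cls \<sigma> \<delta> (a i)). \<beta> i j * N i j k)"
        if "i < l" "k < card (A \<inter> Cls \<sigma> \<delta> (a i))" for i k
        unfolding N_def by (rule someI_ex[OF Nex[OF that]])
      have indal: "\<forall>k. (\<forall>j<card (A \<inter> Cls \<sigma> \<delta> (a i)). k j \<in> Kset \<sigma> \<delta> (a i)) \<longrightarrow>
          (\<Sum>j<card (A \<inter> Cls \<sigma> \<delta> (a i)). \<alpha> i j * k j) = 0 \<longrightarrow> (\<forall>j<card (A \<inter> Cls \<sigma> \<delta> (a i)). k j = 0)"
        if i: "i < l" for i
        using indepK[OF indA, of "a i" "\<alpha> i" "card (A \<inter> Cls \<sigma> \<delta> (a i))" "A \<inter> Cls \<sigma> \<delta> (a i)"] enA i by blast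
      have indbe: "\<forall>k. (\<forall>j<card (A \<inter> Cls \<sigma> \<delta> (a i)). k j \<in> Kset \<sigma> \<delta> (a i)) \<longrightarrow>
          (\<Sum>j<card (A \<inter> Cls \<sigma> \<delta> (a i)). \<beta> i j * k j) = 0 \<longrightarrow> (\<forall>j<card (A \<inter> Cls \<sigma> \<delta> (a i)). k j = 0)"
        if i: "i < l" for i
        using indepK[OF indB, of "a i" "\<beta> i" "card (A \<inter> Cls \<sigma> \<delta> (a i))" "B \<inter> Cls \<sigma> \<delta> (a i)"] enB' i by blast
      have Mk: "\<forall>j<card (A \<inter> Cls \<sigma> \<delta> (a i)). \<forall>k<card (A \<inter> Cls \<sigma> \<delta> (a i)). M i j k \<in> Kset \<sigma> \<delta> (a i)"
        if i: "i < l" for i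
        using Mp[OF i] by blast
      have Nk: "\<forall>j<card (A \<inter> Cls \<sigma> \<delta> (a i)). \<forall>k<card (A \<inter> Cls \<sigma> \<delta> (a i)). N i j k \<in> Kset \<sigma> \<delta> (a i)"
        if i: "i < l" for i
        using Np[OF i] by blast
      have Md: "\<forall>k<card (A \<inter> Cls \<sigma> \<delta> (a i)). \<beta> i k = (\<Sum>j<card (A \<inter> Cls \<sigma> \<delta> (a i)). \<alpha> i j * M i j k)"
        if i: "i < l" for i
        using Mp[OF i] by blast
      have Nd: "\<forall>k<card (A \<inter> Cls \<sigma> \<delta> (a i)). \<alpha> i k = (\<Sum>j<card (A \<inter> Cls \<sigma> \<delta> (a i)). \<beta> i j * N i j k)"
        if i: "i < l" for i
        using Np[OF i] by blast
      have MN: "\<forall>i<l. \<forall>j<card (A \<inter> Cls \<sigma> \<delta> (a i)). \<forall>k<card (A \<inter> Cls \<sigma> \<delta> (a i)).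
          (\<Sum>t<card (A \<inter> Cls \<sigma> \<delta> (a i)). M i j t * N i t k) = (if j = k then 1 else 0)"
        using mat_inv[OF indal Mk Nk Md Nd] by blast
      have NM: "\<forall>i<l. \<forall>j<card (A \<inter> Cls \<sigma> \<delta> (a i)). \<forall>k<card (A \<inter> Cls \<sigma> \<delta> (a i)).
          (\<Sum>t<card (A \<inter> Cls \<sigma> \<delta> (a i)). N i j t * M i t k) = (if j = k then 1 else 0)"
        using mat_inv[OF indbe Nk Mk Nd Md] by blast
      have invM: "\<forall>i<l. inv_matrix_in (Kset \<sigma> \<delta> (a i)) (card (A \<inter> Cls \<sigma> \<delta> (a i))) (M i) \<and>
            (\<forall>k<card (A \<inter> Cls \<sigma> \<delta> (a i)). \<beta> i k = (\<Sum>j<card (A \<inter> Cls \<sigma> \<delta> (a i)). \<alpha> i j * M i j k))"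
      proof (intro allI impI)
        fix i assume i: "i < l"
        show "inv_matrix_in (Kset \<sigma> \<delta> (a i)) (card (A \<inter> Cls \<sigma> \<delta> (a i))) (M i) \<and>
            (\<forall>k<card (A \<inter> Cls \<sigma> \<delta> (a i)). \<beta> i k = (\<Sum>j<card (A \<inter> Cls \<sigma> \<delta> (a i)). \<alpha> i j * M i j k))"
        proof (rule conjI)
        note mn = MN[rule_format, OF i] and nm = NM[rule_format, OF i]
        show "inv_matrix_in (Kset \<sigma> \<delta> (a i)) (card (A \<inter> Cls \<sigma> \<delta> (a i))) (M i)"
          unfolding inv_matrix_in_def
        proof (intro conjI exI[of _ "N i"])
          show "\<forall>j<card (A \<inter> Cls \<sigma> \<delta> (a i)). \<forall>k<card (A \<inter> Cls \<sigma> \<delta> (a i)). M i j k \<in> Kset \<sigma> \<delta> (a i)"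
            by (rule Mk[OF i])
          show "\<forall>j<card (A \<inter> Cls \<sigma> \<delta> (a i)). \<forall>k<card (A \<inter> Cls \<sigma> \<delta> (a i)). N i j k \<in> Kset \<sigma> \<delta> (a i)"
            by (rule Nk[OF i])
          show "\<forall>j<card (A \<inter> Cls \<sigma> \<delta> (a i)). \<forall>k<card (A \<inter> Cls \<sigma> \<delta> (a i)). (\<Sum>t<card (A \<inter> Cls \<sigma> \<delta> (a i)). M i j t * N i t k) = (if j = k then 1 else 0)"
            using mn by blast
          show "\<forall>j<card (A \<inter> Cls \<sigma> \<delta> (a i)). \<forall>k<card (A \<inter> Cls \<sigma> \<delta> (a i)). (\<Sum>t<card (A \<inter> Cls \<sigma> \<delta> (a i)). N i j t * M i t k) = (if j = k then 1 else 0)"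
            using nm by blast
        qed
      next
        show "\<forall>k<card (A \<inter> Cls \<sigma> \<delta> (a i)). \<beta> i k = (\<Sum>j<card (A \<inter> Cls \<sigma> \<delta> (a i)). \<alpha> i j * M i j k)"
          by (rule Md[OF i])
      qed
      qed
      have bvB: "blockvecs l (\<lambda>i. card (B \<inter> Cls \<sigma> \<delta> (a i))) = blockvecs l (\<lambda>i. card (A \<inter> Cls \<sigma> \<delta> (a i)))"
        unfolding blockvecs_def using cardi by auto
      have isoA: "left_iso (funspace A) (blockvecs l (\<lambda>i. card (A \<inter> Cls \<sigma> \<delta> (a i)))) (phi \<sigma> \<delta> l a A \<alpha> (Rk \<sigma> \<delta> \<Omega>))"
        by (rule phi_iso[OF assms(6) indA RkA enA Acov dist])
      have isoB: "left_iso (funspace B) (blockvecs l (\<lambda>i. card (A \<inter> Cls \<sigma> \<delta> (a i)))) (phi \<sigma> \<delta> l a B \<beta> (Rk \<sigma> \<delta> \<Omega>))"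
        using phi_iso[OF finB indB RkB enB Bcov dist] unfolding bvB .
      have isoP: "left_iso (funspace A) (funspace B) (pi_AB \<sigma> \<delta> A B (Rk \<sigma> \<delta> \<Omega>))"
        by (rule pi_iso[OF assms(6) indA RkA finB indB RkB])
      have isoM: "left_iso (blockvecs l (\<lambda>i. card (A \<inter> Cls \<sigma> \<delta> (a i)))) (blockvecs l (\<lambda>i. card (A \<inter> Cls \<sigma> \<delta> (a i)))) (piM l (\<lambda>i. card (A \<inter> Cls \<sigma> \<delta> (a i))) M)"
        by (rule piM_iso[OF MN NM])
      have comm: "\<forall>f\<in>funspace A. phi \<sigma> \<delta> l a B \<beta> (Rk \<sigma> \<delta> \<Omega>) (pi_AB \<sigma> \<delta> A B (Rk \<sigma> \<delta> \<Omega>) f) =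
                               piM l (\<lambda>i. card (A \<inter> Cls \<sigma> \<delta> (a i))) M (phi \<sigma> \<delta> l a A \<alpha> (Rk \<sigma> \<delta> \<Omega>) f)"
      proof
        fix f :: "'a \<Rightarrow> 'a" assume f: "f \<in> funspace A"
        define G where "G = interp \<sigma> \<delta> A (Rk \<sigma> \<delta> \<Omega>) f"
        have G: "G \<in> skpolys_lt (Rk \<sigma> \<delta> \<Omega>)" "Eval_on \<sigma> \<delta> A G = f"
          using interp_prop[OF assms(6) indA f RkA] by (simp_all add: G_def)
        have piG: "pi_AB \<sigma> \<delta> A B (Rk \<sigma> \<delta> \<Omega>) f = Eval_on \<sigma> \<delta> B G" by (simp add: pi_AB_def G_def)
        have iB: "interp \<sigma> \<delta> B (Rk \<sigma> \<delta> \<Omega>) (pi_AB \<sigma> \<delta> A B (Rk \<sigma> \<delta> \<Omega>) f) = G"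
          unfolding piG by (rule interp_eq[OF finB indB RkB G(1)]) simp
        show "phi \<sigma> \<delta> l a B \<beta> (Rk \<sigma> \<delta> \<Omega>) (pi_AB \<sigma> \<delta> A B (Rk \<sigma> \<delta> \<Omega>) f) =
                               piM l (\<lambda>i. card (A \<inter> Cls \<sigma> \<delta> (a i))) M (phi \<sigma> \<delta> l a A \<alpha> (Rk \<sigma> \<delta> \<Omega>) f)"
        proof (rule ext, clarify)
          fix i k
          show "phi \<sigma> \<delta> l a B \<beta> (Rk \<sigma> \<delta> \<Omega>) (pi_AB \<sigma> \<delta> A B (Rk \<sigma> \<delta> \<Omega>) f) (i, k) =
                piM l (\<lambda>i. card (A \<inter> Cls \<sigma> \<delta> (a i))) M (phi \<sigma> \<delta> l a A \<alpha> (Rk \<sigma> \<delta> \<Omega>) f) (i, k)"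
          proof (cases "i < l \<and> k < card (A \<inter> Cls \<sigma> \<delta> (a i))")
            case True
            then have i: "i < l" and k: "k < card (A \<inter> Cls \<sigma> \<delta> (a i))" by auto
            have kB: "k < card (B \<inter> Cls \<sigma> \<delta> (a i))" using k cardi i by simp
            have "phi \<sigma> \<delta> l a B \<beta> (Rk \<sigma> \<delta> \<Omega>) (pi_AB \<sigma> \<delta> A B (Rk \<sigma> \<delta> \<Omega>) f) (i, k)
                = Dapply \<sigma> \<delta> G (a i) (\<beta> i k)" using i kB by (simp add: phi_def iB)
            also have "\<dots> = Dapply \<sigma> \<delta> G (a i) (\<Sum>j<card (A \<inter> Cls \<sigma> \<delta> (a i)). \<alpha> i j * M i j k)"
              using Mp[OF i k] by simp
            also have "\<dots> = (\<Sum>j<card (A \<inter> Cls \<sigma> \<delta> (a i)). Dapply \<sigma> \<delta> G (a i) (\<alpha> i j) * M i j k)"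
              unfolding Dapply_pt_sum by (rule sum.cong) (use Mp[OF i k] in \<open>simp_all add: Dapply_pt_K\<close>)
            also have "\<dots> = (\<Sum>j<card (A \<inter> Cls \<sigma> \<delta> (a i)). phi \<sigma> \<delta> l a A \<alpha> (Rk \<sigma> \<delta> \<Omega>) f (i, j) * M i j k)"
              by (rule sum.cong) (simp_all add: phi_def i G_def)
            also have "\<dots> = piM l (\<lambda>i. card (A \<inter> Cls \<sigma> \<delta> (a i))) M (phi \<sigma> \<delta> l a A \<alpha> (Rk \<sigma> \<delta> \<Omega>) f) (i, k)"
              using i k by (simp add: piM_def)
            finally show ?thesis .
          next
            case False
            then show ?thesis using cardi unfolding phi_def piM_def by auto
          qed
        qed
      qed
      show ?thesis using invM isoA isoB isoP isoM comm by blast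
    qed
    done
qed



end
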